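(* Let $\alpha\in(0,1)$, $H\in(0,\tfrac12)$, $T>0$, and let $\rho$ be a real number with $-\frac{\alpha}{4}-\frac{H\alpha}{2}<\rho<\frac{\alpha+1}{4}-\frac{H\alpha}{2}$ such that $\sum_{i=1}^\infty\|A^{\rho}Q^{1/2}\phi_i\|^2=\sum_i\lambda_i^{2\rho}q_i<\infty$. Set $\kappa=\frac{\alpha}{2}+H\alpha+2\rho$ and assume $\kappa>0$. Let $\tau=T/N$ for a positive integer $N$ and $t_j=j\tau$. Then there is a constant $C$ independent of $\tau$ and $n$ such that for all $1\le n\le N$, $$\mathrm{E}\Big[\Big\|\sum_{j=0}^{n-1}\int_{t_j}^{t_{j+1}}\mathscr{C}(t_n-s)\big(B^Q_H(s)-B^Q_H(t_j)\big)\,\mathrm{d}s\Big\|^2\Big]\le\begin{cases}C\tau^{\frac{2\kappa}{\alpha}}, & 0<\kappa\le\frac{\alpha}{2}+H\alpha,\\ C\tau^{2H+1}, & \kappa>\frac{\alpha}{2}+H\alpha.\end{cases}$$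
   Context: $D\subseteq\mathbb{R}^d$ ($d\in\{1,2,3\}$) is a bounded Lipschitz domain; $\|\cdot\|$, $\langle\cdot,\cdot\rangle$ are the $L^2(D)$ norm and inner product. $A=-\Delta$ with homogeneous Dirichlet boundary conditions, with orthonormal eigenpairs $(\lambda_i,\phi_i)$; $A^{\nu/2}u=\sum_i\lambda_i^{\nu/2}\langle u,\phi_i\rangle\phi_i$. $\mathscr{C}(t)=\cos(A^{\alpha/2}t)$ is defined spectrally: $\mathscr{C}(t)u=\sum_i\cos(\lambda_i^{\alpha/2}t)\langle u,\phi_i\rangle\phi_i$. $Q$ is self-adjoint nonnegative with $Q\phi_i=q_i\phi_i$, $q_i\ge0$. $B^Q_H(t)=\sum_i\sqrt{q_i}\xi^i_H(t)\phi_i$, where $\xi^i_H$ are mutually independent real fractional Brownian motions with Hurst parameter $H$, i.e. centered Gaussian processes with $\mathrm{E}[\xi^i_H(t)\xi^i_H(s)]=\frac12(t^{2H}+s^{2H}-|t-s|^{2H})$. *)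

theory Defs
  imports "HOL-Probability.Probability"
begin

definition fbm_cov :: "real \<Rightarrow> real \<Rightarrow> real \<Rightarrow> real" where
  "fbm_cov H t s = (t powr (2*H) + s powr (2*H) - \<bar>t - s\<bar> powr (2*H)) / 2"

definition centered_gaussian_process ::
  "'w measure \<Rightarrow> real set \<Rightarrow> (real \<Rightarrow> 'w \<Rightarrow> real) \<Rightarrow> (real \<Rightarrow> real \<Rightarrow> real) \<Rightarrow> bool" where
  "centered_gaussian_process M I X R \<longleftrightarrow>
     (\<forall>t\<in>I. X t \<in> borel_measurable M) \<and>
     (\<forall>(n::nat) (t::nat \<Rightarrow> real) (a::nat \<Rightarrow> real). (\<forall>k<n. t k \<in> I) \<longrightarrow>
        (let Y = (\<lambda>\<omega>. \<Sum>k<n. a k * X (t k) \<omega>);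
             v = (\<Sum>k<n. \<Sum>l<n. a k * a l * R (t k) (t l))
         in (v > 0 \<longrightarrow> distributed M lborel Y (normal_density 0 (sqrt v))) \<and>
            (v \<le> 0 \<longrightarrow> (AE \<omega> in M. Y \<omega> = 0))))"

definition is_fbm :: "'w measure \<Rightarrow> real \<Rightarrow> (real \<Rightarrow> 'w \<Rightarrow> real) \<Rightarrow> bool" where
  "is_fbm M H X \<longleftrightarrow> centered_gaussian_process M {0..} X (fbm_cov H) \<and>
     (\<forall>\<omega>\<in>space M. continuous_on {0..} (\<lambda>t. X t \<omega>))"

end

theory Submission
  imports Defs
begin

lemma integral_split_uniform:
  fixes f :: "real \<Rightarrow> 'a::banach"
  assumes cont: "continuous_on {a..a+h} f" and h: "0 \<le> h" and m: "0 < m"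
  shows "k \<le> m \<Longrightarrow> integral {a..a + real k * (h/real m)} f =
     (\<Sum>p<k. integral {a + real p * (h/real m)..a + real (Suc p) * (h/real m)} f)"
proof (induction k)
  case 0 then show ?case by simp
next
  case (Suc k)
  let ?d = "h / real m"
  have d: "0 \<le> ?d" using h by simp
  have le0: "real (Suc k) * ?d \<le> real m * ?d" using Suc.prems d by (intro mult_right_mono) auto
  have le: "real (Suc k) * ?d \<le> h" using le0 m by simp
  have int: "f integrable_on {a..a + real (Suc k) * ?d}"
    apply (rule integrable_continuous_real)
    apply (rule continuous_on_subset[OF cont]) using le by auto
  have "integral {a..a + real (Suc k) * ?d} f = integral {a..a + real k * ?d} f +
      integral {a + real k * ?d..a + real (Suc k) * ?d} f"
    apply (rule Henstock_Kurzweil_Integration.integral_combine[symmetric])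
    using d int h by (auto simp: distrib_right divide_right_mono)
  then show ?case using Suc by simp
qed

lemma riemann_sum_tendsto:
  fixes f :: "real \<Rightarrow> 'a::euclidean_space"
  assumes cont: "continuous_on {a..a+h} f" and h: "0 \<le> h"
  shows "(\<lambda>m. \<Sum>p<m. (h / real m) *\<^sub>R f (a + real p * (h / real m))) \<longlonglongrightarrow> integral {a..a+h} f"
proof (rule LIMSEQ_I)
  fix e :: real assume e: "0 < e"
  have uc: "uniformly_continuous_on {a..a+h} f"
    by (rule compact_uniformly_continuous[OF cont]) auto
  define e' where "e' = e / (h + 1)"
  have e': "0 < e'" using e h by (simp add: e'_def)
  from uc[unfolded uniformly_continuous_on_def, rule_format, OF e'] obtain d where
    d: "0 < d" and dd: "\<And>x y. x \<in> {a..a+h} \<Longrightarrow> y \<in> {a..a+h} \<Longrightarrow> dist y x < d \<Longrightarrow> dist (f y) (f x) < e'"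
    by metis
  obtain M :: nat where M: "h / d < real M" using reals_Archimedean2 by blast
  show "\<exists>no. \<forall>m\<ge>no. norm ((\<Sum>p<m. (h / real m) *\<^sub>R f (a + real p * (h / real m))) - integral {a..a+h} f) < e"
  proof (intro exI[of _ "Suc M"] allI impI)
    fix m assume mM: "Suc M \<le> m"
    then have m: "0 < m" by simp
    let ?d = "h / real m"
    have dpos: "0 \<le> ?d" using h by simp
    have dlt: "?d < d"
    proof -
      have "h < d * real M" using M d by (simp add: field_simps)
      also have "\<dots> \<le> d * real m" using mM d by simp
      finally show ?thesis using m by (simp add: field_simps)
    qed
    have hm: "real m * ?d = h" using m by simp
    have split: "integral {a..a+h} f = (\<Sum>p<m. integral {a + real p * ?d..a + real (Suc p) * ?d} f)"
      using integral_split_uniform[OF cont h m, of m] hm by simp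
    have each: "norm (?d *\<^sub>R f (a + real p * ?d) - integral {a + real p * ?d..a + real (Suc p) * ?d} f) \<le> ?d * e'"
      if p: "p < m" for p
    proof -
      let ?c = "a + real p * ?d"
      have c1: "a \<le> ?c" using h by simp
      have c2: "?c + ?d \<le> a + h"
      proof -
        have "real (Suc p) * ?d \<le> real m * ?d" using p dpos by (intro mult_right_mono) auto
        then show ?thesis using hm by (simp add: distrib_right add_divide_distrib)
      qed
      have eqc: "a + real (Suc p) * ?d = ?c + ?d" using m by (simp add: field_simps)
      have int: "f integrable_on {?c..?c+?d}"
        apply (rule integrable_continuous_real)
        apply (rule continuous_on_subset[OF cont]) using c1 c2 by auto
      have hi: "((\<lambda>x. f x - f ?c) has_integral (integral {?c..?c+?d} f - ?d *\<^sub>R f ?c)) {?c..?c+?d}"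
        using has_integral_diff[OF integrable_integral[OF int] has_integral_const_real[of "f ?c" ?c "?c+?d"]]
        using dpos by simp
      have "norm (integral {?c..?c+?d} f - ?d *\<^sub>R f ?c) \<le> e' * Henstock_Kurzweil_Integration.content (cbox ?c (?c+?d))"
      proof (rule has_integral_bound[of e' "\<lambda>x. f x - f ?c"])
        show "0 \<le> e'" using e' by simp
        show "((\<lambda>x. f x - f ?c) has_integral (integral {?c..?c+?d} f - ?d *\<^sub>R f ?c)) (cbox ?c (?c+?d))"
          using hi by simp
        fix x assume x: "x \<in> cbox ?c (?c+?d)"
        have "dist (f x) (f ?c) < e'"
          apply (rule dd) using x c1 c2 dpos dlt by (auto simp: dist_real_def)
        then show "norm (f x - f ?c) \<le> e'" by (simp add: dist_norm)
      qed
      also have "\<dots> = e' * ?d" using dpos by simp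
      finally show ?thesis unfolding eqc by (simp add: norm_minus_commute mult.commute)
    qed
    have "norm ((\<Sum>p<m. ?d *\<^sub>R f (a + real p * ?d)) - integral {a..a+h} f)
        = norm (\<Sum>p<m. (?d *\<^sub>R f (a + real p * ?d) - integral {a + real p * ?d..a + real (Suc p) * ?d} f))"
      by (simp add: split sum_subtractf)
    also have "\<dots> \<le> (\<Sum>p<m. ?d * e')"
      by (rule order_trans[OF norm_sum sum_mono]) (use each in auto)
    also have "\<dots> = h * e'" using hm m by simp
    also have "\<dots> < e" using h e by (simp add: e'_def field_simps)
    finally show "norm ((\<Sum>p<m. ?d *\<^sub>R f (a + real p * ?d)) - integral {a..a+h} f) < e" .
  qed
qed



lemma cmod_cis_minus_1: "cmod (cis t - 1) \<le> \<bar>t\<bar>"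
proof -
  have c: "cos t = 1 - 2 * (sin (t/2))\<^sup>2" using cos_double_sin[of "t/2"] by simp
  have "(cmod (cis t - 1))\<^sup>2 = (cos t - 1)\<^sup>2 + (sin t)\<^sup>2"
    by (simp add: cmod_power2)
  also have "\<dots> = 2 - 2 * cos t" using sin_cos_squared_add[of t] by (simp add: power2_eq_square algebra_simps)
  also have "\<dots> = 4 * (sin (t/2))\<^sup>2" using c by simp
  also have "\<dots> \<le> 4 * (t/2)\<^sup>2"
    using abs_sin_x_le_abs_x[of "t/2"] by (simp add: abs_le_square_iff[symmetric])
  also have "\<dots> = t\<^sup>2" by (simp add: power2_eq_square)
  finally show ?thesis using abs_le_square_iff by (metis abs_norm_cancel)
qed

lemma cmod_cis_diff: "cmod (cis a - cis b) \<le> \<bar>a - b\<bar>"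
proof -
  have "cis a - cis b = cis b * (cis (a - b) - 1)" by (simp add: algebra_simps cis_mult)
  then have "cmod (cis a - cis b) = cmod (cis (a - b) - 1)" by (simp add: norm_mult)
  then show ?thesis using cmod_cis_minus_1 by simp
qed

lemma cmod_cis_diff2: "cmod (cis a - cis b) \<le> 2"
proof -
  have "cmod (cis a - cis b) \<le> cmod (cis a) + cmod (cis b)" by (rule norm_triangle_ineq4)
  then show ?thesis by simp
qed

definition ff :: "real \<Rightarrow> real \<Rightarrow> complex" where
  "ff \<tau> x = (if x = 0 then complex_of_real \<tau> else (cis (x * \<tau>) - 1) / (\<i> * complex_of_real x))"

lemma cis_has_vderiv:
  assumes "x \<noteq> 0"
  shows "((\<lambda>s. cis (x * s) * inverse (\<i> * complex_of_real x)) has_vector_derivative cis (x * s)) (at s within S)"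
proof -
  have "((\<lambda>s. cis (x * s) * inverse (\<i> * complex_of_real x)) has_derivative
     (\<lambda>t. (t * x) *\<^sub>R (\<i> * cis (x * s)) * inverse (\<i> * complex_of_real x))) (at s within S)"
    by (auto intro!: derivative_eq_intros)
  moreover have "(\<lambda>t. (t * x) *\<^sub>R (\<i> * cis (x * s)) * inverse (\<i> * complex_of_real x)) = (\<lambda>t. t *\<^sub>R cis (x * s))"
    using assms by (auto simp: scaleR_conv_of_real field_simps)
  ultimately show ?thesis by (simp add: has_vector_derivative_def)
qed

lemma cis_has_integral:
  assumes "0 \<le> \<tau>"
  shows "((\<lambda>s. cis (x * s)) has_integral (cis (x * c) * ff \<tau> x)) {c..c+\<tau>}"
proof (cases "x = 0")
  case True
  then show ?thesis using has_integral_const_real[of "1::complex" c "c+\<tau>"] assms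
    by (simp add: ff_def scaleR_conv_of_real)
next
  case False
  have "((\<lambda>s. cis (x * s)) has_integral
      (cis (x * (c+\<tau>)) * inverse (\<i> * complex_of_real x) - cis (x * c) * inverse (\<i> * complex_of_real x))) {c..c+\<tau>}"
    by (rule fundamental_theorem_of_calculus) (use assms cis_has_vderiv[OF False] in auto)
  moreover have "cis (x * (c+\<tau>)) * inverse (\<i> * complex_of_real x) - cis (x * c) * inverse (\<i> * complex_of_real x)
      = cis (x * c) * ff \<tau> x"
    using False by (simp add: ff_def distrib_left cis_mult[symmetric] field_simps)
  ultimately show ?thesis by simp
qed

lemma ff_integral: "0 \<le> \<tau> \<Longrightarrow> ((\<lambda>s. cis (x * s)) has_integral ff \<tau> x) {0..\<tau>}"
  using cis_has_integral[of \<tau> x 0] by simp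

lemma norm_ff_le: assumes "0 \<le> \<tau>" shows "cmod (ff \<tau> x) \<le> \<tau>"
proof -
  have "norm (ff \<tau> x) \<le> 1 * Henstock_Kurzweil_Integration.content (cbox 0 \<tau>)"
    by (rule has_integral_bound[of 1 "\<lambda>s. cis (x * s)"]) (use ff_integral[OF assms] in auto)
  then show ?thesis using assms by simp
qed

lemma norm_ff_le2: assumes "x \<noteq> 0" shows "cmod (ff \<tau> x) \<le> 2 / \<bar>x\<bar>"
proof -
  have "cmod (ff \<tau> x) = cmod (cis (x * \<tau>) - 1) / \<bar>x\<bar>"
    using assms by (simp add: ff_def norm_divide norm_mult)
  also have "\<dots> \<le> 2 / \<bar>x\<bar>"
    using cmod_cis_diff2[of "x*\<tau>" 0] assms by (simp add: divide_right_mono)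
  finally show ?thesis .
qed



definition DD :: "nat \<Rightarrow> real \<Rightarrow> complex" where
  "DD n x = (\<Sum>j<n. cis (x * real j))"

definition bb :: "real \<Rightarrow> real \<Rightarrow> real \<Rightarrow> complex" where
  "bb \<tau> \<nu> \<omega> = ff \<tau> (\<omega> - \<nu>) - ff \<tau> (- \<nu>)"

definition GG :: "nat \<Rightarrow> real \<Rightarrow> real \<Rightarrow> real \<Rightarrow> complex" where
  "GG n \<tau> \<nu> \<omega> = DD n ((\<omega> - \<nu>) * \<tau>) * bb \<tau> \<nu> \<omega>"

lemma DD_ff: "DD n (k * \<tau>) * ff \<tau> k = ff (real n * \<tau>) k"
proof (cases "k = 0")
  case True then show ?thesis by (simp add: DD_def ff_def)
next
  case False
  have "DD n (k * \<tau>) * (cis (k * \<tau>) - 1) = (\<Sum>j<n. cis (k * \<tau> * real (Suc j)) - cis (k * \<tau> * real j))"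
    unfolding DD_def sum_distrib_right
    by (rule sum.cong) (auto simp: algebra_simps cis_mult)
  also have "\<dots> = cis (k * \<tau> * real n) - 1"
    by (subst sum_lessThan_telescope) simp
  finally show ?thesis using False
    by (simp add: ff_def mult_ac)
qed

lemma norm_bb1: "0 \<le> \<tau> \<Longrightarrow> cmod (bb \<tau> \<nu> \<omega>) \<le> 2 * \<tau>"
  unfolding bb_def using norm_ff_le[of \<tau> "\<omega> - \<nu>"] norm_ff_le[of \<tau> "-\<nu>"]
  by (smt (verit) norm_triangle_ineq4)

lemma norm_bb2: assumes "0 \<le> \<tau>" shows "cmod (bb \<tau> \<nu> \<omega>) \<le> \<bar>\<omega>\<bar> * \<tau>\<^sup>2"
proof -
  have hi: "((\<lambda>s. cis ((\<omega> - \<nu>) * s) - cis ((-\<nu>) * s)) has_integral bb \<tau> \<nu> \<omega>) (cbox 0 \<tau>)"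
    unfolding bb_def cbox_interval by (rule has_integral_diff[OF ff_integral[OF assms] ff_integral[OF assms]])
  have "cmod (bb \<tau> \<nu> \<omega>) \<le> (\<bar>\<omega>\<bar> * \<tau>) * Henstock_Kurzweil_Integration.content (cbox 0 \<tau>)"
  proof (rule has_integral_bound[OF _ hi])
    show "0 \<le> \<bar>\<omega>\<bar> * \<tau>" using assms by simp
    fix s assume s: "s \<in> cbox 0 \<tau>"
    have "cmod (cis ((\<omega> - \<nu>) * s) - cis ((-\<nu>) * s)) \<le> \<bar>(\<omega> - \<nu>) * s - (-\<nu>) * s\<bar>"
      by (rule cmod_cis_diff)
    also have "\<dots> = \<bar>\<omega>\<bar> * s" using s by (simp add: algebra_simps abs_mult)
    also have "\<dots> \<le> \<bar>\<omega>\<bar> * \<tau>" using s by (simp add: mult_left_mono)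
    finally show "cmod (cis ((\<omega> - \<nu>) * s) - cis ((-\<nu>) * s)) \<le> \<bar>\<omega>\<bar> * \<tau>" .
  qed
  then show ?thesis using assms by (simp add: power2_eq_square mult_ac)
qed

lemma bb_identity:
  assumes "\<nu> \<noteq> 0"
  shows "bb \<tau> \<nu> \<omega> = (cis ((\<omega> - \<nu>) * \<tau>) - cis (-\<nu> * \<tau>)) / (- \<i> * complex_of_real \<nu>)
     + complex_of_real (\<omega> / \<nu>) * ff \<tau> (\<omega> - \<nu>)"
proof (cases "\<omega> = \<nu>")
  case True
  then show ?thesis using assms
    by (simp add: bb_def ff_def field_simps)
next
  case False
  then have w: "\<omega> - \<nu> \<noteq> 0" by simp
  have w': "complex_of_real \<omega> - complex_of_real \<nu> \<noteq> 0" using w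
    by (metis of_real_diff of_real_eq_0_iff)
  show ?thesis using assms w w'
    by (simp add: bb_def ff_def field_simps)
qed

lemma norm_bb3:
  assumes "\<nu> \<noteq> 0" "0 \<le> \<tau>"
  shows "cmod (bb \<tau> \<nu> \<omega>) \<le> 2 * \<bar>\<omega>\<bar> * \<tau> / \<bar>\<nu>\<bar>"
proof -
  have "cmod (cis ((\<omega> - \<nu>) * \<tau>) - cis (-\<nu> * \<tau>)) \<le> \<bar>\<omega>\<bar> * \<tau>"
    using cmod_cis_diff[of "(\<omega> - \<nu>) * \<tau>" "-\<nu> * \<tau>"] assms by (simp add: algebra_simps abs_mult)
  then have a: "cmod ((cis ((\<omega> - \<nu>) * \<tau>) - cis (-\<nu> * \<tau>)) / (- \<i> * complex_of_real \<nu>)) \<le> \<bar>\<omega>\<bar> * \<tau> / \<bar>\<nu>\<bar>"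
    using assms by (simp add: norm_divide norm_mult divide_right_mono)
  have b: "cmod (complex_of_real (\<omega> / \<nu>) * ff \<tau> (\<omega> - \<nu>)) \<le> \<bar>\<omega>\<bar> * \<tau> / \<bar>\<nu>\<bar>"
  proof -
    have "cmod (complex_of_real (\<omega> / \<nu>) * ff \<tau> (\<omega> - \<nu>)) = \<bar>\<omega>\<bar> / \<bar>\<nu>\<bar> * cmod (ff \<tau> (\<omega> - \<nu>))"
      by (simp add: norm_mult norm_divide)
    also have "\<dots> \<le> \<bar>\<omega>\<bar> / \<bar>\<nu>\<bar> * \<tau>" using norm_ff_le[OF assms(2), of "\<omega> - \<nu>"]
      by (intro mult_left_mono) auto
    finally show ?thesis by simp
  qed
  have "cmod (bb \<tau> \<nu> \<omega>) \<le> \<bar>\<omega>\<bar> * \<tau> / \<bar>\<nu>\<bar> + \<bar>\<omega>\<bar> * \<tau> / \<bar>\<nu>\<bar>"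
    unfolding bb_identity[OF assms(1)] using a b norm_triangle_ineq[of "(cis ((\<omega> - \<nu>) * \<tau>) - cis (-\<nu> * \<tau>)) / (- \<i> * complex_of_real \<nu>)"
      "complex_of_real (\<omega> / \<nu>) * ff \<tau> (\<omega> - \<nu>)"] by linarith
  then show ?thesis by (simp add: mult_ac)
qed

lemma cos_as_cis: "complex_of_real (cos a) = (cis a + cis (- a)) / 2"
  by (simp add: complex_eq_iff)

lemma piece_has_integral:
  assumes "0 \<le> \<tau>"
  shows "((\<lambda>s. complex_of_real (cos (\<mu> * (T0 - s))) * (cis (\<omega> * s) - cis (\<omega> * c))) has_integral
      (cis (\<mu> * T0) * cis ((\<omega> - \<mu>) * c) * bb \<tau> \<mu> \<omega> + cis (-\<mu> * T0) * cis ((\<omega> - (-\<mu>)) * c) * bb \<tau> (-\<mu>) \<omega>) / 2) {c..c+\<tau>}"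
proof -
  have i1: "((\<lambda>s. cis ((\<omega> - \<mu>) * s)) has_integral cis ((\<omega> - \<mu>) * c) * ff \<tau> (\<omega> - \<mu>)) {c..c+\<tau>}"
    by (rule cis_has_integral[OF assms])
  have i2: "((\<lambda>s. cis ((-\<mu>) * s)) has_integral cis ((-\<mu>) * c) * ff \<tau> (-\<mu>)) {c..c+\<tau>}"
    by (rule cis_has_integral[OF assms])
  have i3: "((\<lambda>s. cis ((\<omega> - (-\<mu>)) * s)) has_integral cis ((\<omega> - (-\<mu>)) * c) * ff \<tau> (\<omega> - (-\<mu>))) {c..c+\<tau>}"
    by (rule cis_has_integral[OF assms])
  have i4: "((\<lambda>s. cis (\<mu> * s)) has_integral cis (\<mu> * c) * ff \<tau> \<mu>) {c..c+\<tau>}"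
    by (rule cis_has_integral[OF assms])
  have comb: "((\<lambda>s. (cis (\<mu> * T0) * (cis ((\<omega> - \<mu>) * s) - cis (\<omega> * c) * cis ((-\<mu>) * s))
       + cis (-\<mu> * T0) * (cis ((\<omega> - (-\<mu>)) * s) - cis (\<omega> * c) * cis (\<mu> * s))) / 2) has_integral
      (cis (\<mu> * T0) * (cis ((\<omega> - \<mu>) * c) * ff \<tau> (\<omega> - \<mu>) - cis (\<omega> * c) * (cis ((-\<mu>) * c) * ff \<tau> (-\<mu>)))
       + cis (-\<mu> * T0) * (cis ((\<omega> - (-\<mu>)) * c) * ff \<tau> (\<omega> - (-\<mu>)) - cis (\<omega> * c) * (cis (\<mu> * c) * ff \<tau> \<mu>))) / 2) {c..c+\<tau>}"
    by (intro has_integral_divide has_integral_add has_integral_mult_right has_integral_diff i1 i2 i3 i4)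
  have eq1: "(cis (\<mu> * T0) * (cis ((\<omega> - \<mu>) * s) - cis (\<omega> * c) * cis ((-\<mu>) * s))
       + cis (-\<mu> * T0) * (cis ((\<omega> - (-\<mu>)) * s) - cis (\<omega> * c) * cis (\<mu> * s))) / 2
     = complex_of_real (cos (\<mu> * (T0 - s))) * (cis (\<omega> * s) - cis (\<omega> * c))" for s
    unfolding cos_as_cis by (simp add: cis_mult algebra_simps add_divide_distrib diff_divide_distrib)
  have eq2': "(cis (\<mu> * T0) * (cis ((\<omega> - \<mu>) * c) * ff \<tau> (\<omega> - \<mu>) - cis (\<omega> * c) * (cis ((-\<mu>) * c) * ff \<tau> (-\<mu>)))
       + cis (-\<mu> * T0) * (cis ((\<omega> - (-\<mu>)) * c) * ff \<tau> (\<omega> - (-\<mu>)) - cis (\<omega> * c) * (cis (\<mu> * c) * ff \<tau> \<mu>)))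
    = (cis (\<mu> * T0) * cis ((\<omega> - \<mu>) * c) * bb \<tau> \<mu> \<omega> + cis (-\<mu> * T0) * cis ((\<omega> - (-\<mu>)) * c) * bb \<tau> (-\<mu>) \<omega>)"
  proof -
    have k1: "cis (\<omega> * c) * cis ((-\<mu>) * c) = cis ((\<omega> - \<mu>) * c)" by (simp add: cis_mult left_diff_distrib)
    have k2: "cis (\<omega> * c) * cis (\<mu> * c) = cis ((\<omega> - (-\<mu>)) * c)" by (simp add: cis_mult distrib_right)
    show ?thesis unfolding bb_def mult.assoc[symmetric] k1 k2 by (simp add: algebra_simps)
  qed
  have eq2: "(cis (\<mu> * T0) * (cis ((\<omega> - \<mu>) * c) * ff \<tau> (\<omega> - \<mu>) - cis (\<omega> * c) * (cis ((-\<mu>) * c) * ff \<tau> (-\<mu>)))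
       + cis (-\<mu> * T0) * (cis ((\<omega> - (-\<mu>)) * c) * ff \<tau> (\<omega> - (-\<mu>)) - cis (\<omega> * c) * (cis (\<mu> * c) * ff \<tau> \<mu>))) / 2
    = (cis (\<mu> * T0) * cis ((\<omega> - \<mu>) * c) * bb \<tau> \<mu> \<omega> + cis (-\<mu> * T0) * cis ((\<omega> - (-\<mu>)) * c) * bb \<tau> (-\<mu>) \<omega>) / 2"
    by (simp only: eq2')
  show ?thesis using comb unfolding eq1 eq2 .
qed

definition hh :: "nat \<Rightarrow> real \<Rightarrow> real \<Rightarrow> real \<Rightarrow> complex" where
  "hh n \<tau> \<mu> \<omega> = (\<Sum>j<n. integral {real j * \<tau>..real j * \<tau> + \<tau>}
      (\<lambda>s. complex_of_real (cos (\<mu> * (real n * \<tau> - s))) * (cis (\<omega> * s) - cis (\<omega> * (real j * \<tau>)))))"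

lemma hh_closed:
  assumes "0 \<le> \<tau>"
  shows "hh n \<tau> \<mu> \<omega> = (cis (\<mu> * (real n * \<tau>)) * GG n \<tau> \<mu> \<omega> + cis (-\<mu> * (real n * \<tau>)) * GG n \<tau> (-\<mu>) \<omega>) / 2"
proof -
  have "hh n \<tau> \<mu> \<omega> = (\<Sum>j<n. (cis (\<mu> * (real n * \<tau>)) * cis ((\<omega> - \<mu>) * (real j * \<tau>)) * bb \<tau> \<mu> \<omega>
       + cis (-\<mu> * (real n * \<tau>)) * cis ((\<omega> - (-\<mu>)) * (real j * \<tau>)) * bb \<tau> (-\<mu>) \<omega>) / 2)"
    unfolding hh_def by (rule sum.cong[OF refl], rule integral_unique, rule piece_has_integral[OF assms])
  also have "\<dots> = (cis (\<mu> * (real n * \<tau>)) * GG n \<tau> \<mu> \<omega> + cis (-\<mu> * (real n * \<tau>)) * GG n \<tau> (-\<mu>) \<omega>) / 2"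
    unfolding GG_def DD_def
    by (simp add: sum_divide_distrib[symmetric] sum.distrib sum_distrib_left sum_distrib_right mult_ac)
  finally show ?thesis .
qed



lemma nn_integral_powr_0c:
  assumes "a > -1" "0 \<le> c"
  shows "(\<integral>\<^sup>+x. ennreal (indicator {0..c} x * x powr a) \<partial>lborel) = ennreal (c powr (a+1) / (a+1))"
proof (rule nn_integral_has_integral_lborel)
  show "(\<lambda>x. indicator {0..c} x * x powr a) \<in> borel_measurable borel" by measurable
  show "0 \<le> indicator {0..c} x * x powr a" for x by simp
  have "((\<lambda>x. if x \<in> {0..c} then x powr a else 0) has_integral (c powr (a+1) / (a+1))) UNIV"
    using has_integral_powr_from_0[OF assms] by (subst has_integral_restrict_UNIV)
  then show "((\<lambda>x. indicator {0..c} x * x powr a) has_integral (c powr (a+1) / (a+1))) UNIV"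
    by (rule has_integral_eq_rhs[OF has_integral_cong[THEN iffD1, rotated]]) (auto simp: indicator_def)
qed

lemma nn_integral_powr_inf:
  assumes "e < -1" "0 < A"
  shows "(\<integral>\<^sup>+x. ennreal (indicator {A..} x * x powr e) \<partial>lborel) = ennreal (-(A powr (e+1)) / (e+1))"
proof (rule nn_integral_has_integral_lborel)
  show "(\<lambda>x. indicator {A..} x * x powr e) \<in> borel_measurable borel" by measurable
  show "0 \<le> indicator {A..} x * x powr e" for x by simp
  have "((\<lambda>x. if x \<in> {A..} then x powr e else 0) has_integral (-(A powr (e+1)) / (e+1))) UNIV"
    using has_integral_powr_to_inf[OF assms] by (subst has_integral_restrict_UNIV)
  then show "((\<lambda>x. indicator {A..} x * x powr e) has_integral (-(A powr (e+1)) / (e+1))) UNIV"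
    by (rule has_integral_eq_rhs[OF has_integral_cong[THEN iffD1, rotated]]) (auto simp: indicator_def)
qed

lemma one_minus_cos_le: "1 - cos t \<le> (t::real)\<^sup>2 / 2"
proof -
  have c: "cos t = 1 - 2 * (sin (t/2))\<^sup>2" using cos_double_sin[of "t/2"] by simp
  have "(sin (t/2))\<^sup>2 \<le> (t/2)\<^sup>2"
    using abs_sin_x_le_abs_x[of "t/2"] by (simp add: abs_le_square_iff[symmetric])
  then show ?thesis using c by (simp add: power2_eq_square)
qed

definition Sn :: "real \<Rightarrow> ennreal" where
  "Sn H = (\<integral>\<^sup>+v. ennreal (indicator {0<..} v * (1 - cos v) * v powr (-1-2*H)) \<partial>lborel)"

lemma Sn_finite:
  assumes H: "0 < H" "H < 1/2"
  shows "Sn H < \<infinity>"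
proof -
  have le: "ennreal (indicator {0<..} v * (1 - cos v) * v powr (-1-2*H)) \<le>
      ennreal (indicator {0..1} v * v powr (1-2*H)) + ennreal (indicator {1..} v * (2 * v powr (-1-2*H)))" for v
  proof (cases "0 < v")
    case False then show ?thesis by simp
  next
    case True
    show ?thesis
    proof (cases "v \<le> 1")
      case True
      have "1 - cos v \<le> v\<^sup>2" using one_minus_cos_le[of v] zero_le_power2[of v] by linarith
      then have "(1 - cos v) * v powr (-1-2*H) \<le> v\<^sup>2 * v powr (-1-2*H)"
        by (intro mult_right_mono) auto
      also have "\<dots> = v powr (1 - 2*H)"
      proof -
        have "v powr (1-2*H) = v powr (2 + (-1-2*H))" by (intro arg_cong[where f="(powr) v"]) simp
        also have "\<dots> = v powr 2 * v powr (-1-2*H)" by (rule powr_add)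
        also have "\<dots> = v\<^sup>2 * v powr (-1-2*H)" using \<open>0 < v\<close> by (simp add: powr_numeral)
        finally show ?thesis by simp
      qed
      finally show ?thesis using \<open>0 < v\<close> True
        by (intro order_trans[OF _ add_increasing2]) (auto simp: ennreal_leI)
    next
      case False
      have "(1 - cos v) * v powr (-1-2*H) \<le> 2 * v powr (-1-2*H)"
        using cos_ge_minus_one[of v] by (intro mult_right_mono) auto
      then show ?thesis using \<open>0 < v\<close> False
        by (intro order_trans[OF _ add_increasing]) (auto simp: ennreal_leI)
    qed
  qed
  have "Sn H \<le> (\<integral>\<^sup>+v. ennreal (indicator {0..1} v * v powr (1-2*H)) + ennreal (indicator {1..} v * (2 * v powr (-1-2*H))) \<partial>lborel)"
    unfolding Sn_def by (rule nn_integral_mono) (rule le)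
  also have "\<dots> = (\<integral>\<^sup>+v. ennreal (indicator {0..1} v * v powr (1-2*H)) \<partial>lborel) +
      (\<integral>\<^sup>+v. ennreal 2 * ennreal (indicator {1..} v * v powr (-1-2*H)) \<partial>lborel)"
  proof -
    have "(\<integral>\<^sup>+v. ennreal (indicator {0..1} v * v powr (1-2*H)) + ennreal (indicator {1..} v * (2 * v powr (-1-2*H))) \<partial>lborel)
      = (\<integral>\<^sup>+v. ennreal (indicator {0..1} v * v powr (1-2*H)) \<partial>lborel) +
      (\<integral>\<^sup>+v. ennreal (indicator {1..} v * (2 * v powr (-1-2*H))) \<partial>lborel)"
      by (rule nn_integral_add) auto
    moreover have "(\<integral>\<^sup>+v. ennreal (indicator {1..} v * (2 * v powr (-1-2*H))) \<partial>lborel) =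
      (\<integral>\<^sup>+v. ennreal 2 * ennreal (indicator {1..} v * v powr (-1-2*H)) \<partial>lborel)"
      by (intro nn_integral_cong) (simp add: ennreal_mult mult.left_commute)
    ultimately show ?thesis by simp
  qed
  also have "\<dots> = ennreal (1 powr (1-2*H+1) / (1-2*H+1)) + ennreal 2 * ennreal (-(1 powr (-1-2*H+1)) / (-1-2*H+1))"
  proof -
    have I1: "(\<integral>\<^sup>+v. ennreal (indicator {0..1} v * v powr (1-2*H)) \<partial>lborel) = ennreal (1 powr (1-2*H+1) / (1-2*H+1))"
      by (rule nn_integral_powr_0c) (use H in auto)
    have I2: "(\<integral>\<^sup>+v. ennreal (indicator {1..} v * v powr (-1-2*H)) \<partial>lborel) = ennreal (-(1 powr (-1-2*H+1)) / (-1-2*H+1))"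
      by (rule nn_integral_powr_inf) (use H in auto)
    have I3: "(\<integral>\<^sup>+v. ennreal 2 * ennreal (indicator {1..} v * v powr (-1-2*H)) \<partial>lborel) =
        ennreal 2 * (\<integral>\<^sup>+v. ennreal (indicator {1..} v * v powr (-1-2*H)) \<partial>lborel)"
      by (rule nn_integral_cmult) measurable
    show ?thesis unfolding I3 I1 I2 ..
  qed
  also have "\<dots> < \<infinity>" by (simp add: ennreal_mult_less_top)
  finally show ?thesis .
qed

lemma Sn_pos:
  assumes H: "0 < H" "H < 1/2"
  shows "0 < Sn H"
proof -
  define c :: real where "c = (1 - cos 1) / 4"
  have c1: "0 < 1 - cos (1::real)"
  proof -
    have "cos (1::real) = 1 - 2 * (sin (1/2))\<^sup>2" using cos_double_sin[of "1/2"] by simp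
    moreover have "0 < sin (1/2::real)" by (rule sin_gt_zero) (use pi_gt3 in auto)
    ultimately show ?thesis by simp
  qed
  have le: "ennreal c * indicator {1..2::real} v \<le> ennreal (indicator {0<..} v * (1 - cos v) * v powr (-1-2*H))" for v
  proof (cases "v \<in> {1..2}")
    case False then show ?thesis by simp
  next
    case True
    have cv: "cos v \<le> cos 1" using True pi_gt3 by (intro cos_monotone_0_pi_le) auto
    have "v powr (-2) \<le> v powr (-1-2*H)" using True H by (intro powr_mono) auto
    moreover have "1/4 \<le> v powr (-2)"
    proof -
      have "v powr (-2) = 1 / v\<^sup>2" using True by (simp add: powr_minus powr_realpow divide_inverse)
      moreover have "v\<^sup>2 \<le> 4"
      proof -
        have "v * v \<le> 2 * 2" by (rule mult_mono) (use True in auto)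
        then show ?thesis by (simp add: power2_eq_square)
      qed
      moreover have "0 < v\<^sup>2" using True by simp
      ultimately have "1/4 \<le> 1/v\<^sup>2" by (intro divide_left_mono) auto
      then show ?thesis using \<open>v powr (-2) = 1 / v\<^sup>2\<close> by simp
    qed
    ultimately have "1/4 \<le> v powr (-1-2*H)" by simp
    then have "(1 - cos 1) * (1/4) \<le> (1 - cos v) * v powr (-1-2*H)"
      using cv c1 by (intro mult_mono) auto
    then have "ennreal c \<le> ennreal (indicator {0<..} v * (1 - cos v) * v powr (-1-2*H))"
      using True by (intro ennreal_leI) (auto simp: c_def)
    then show ?thesis using True by simp
  qed
  have "ennreal c * emeasure lborel {1..2::real} \<le> Sn H"
    unfolding Sn_def
    by (subst nn_integral_cmult_indicator[symmetric]) (auto intro!: nn_integral_mono le simp del: ennreal_mult')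
  moreover have "0 < ennreal c * emeasure lborel {1..2::real}" using c1 by (simp add: c_def)
  ultimately show ?thesis by order
qed



lemma Sn_scale:
  shows "(\<integral>\<^sup>+\<omega>. ennreal (indicator {0<..} \<omega> * (1 - cos (\<omega> * x)) * \<omega> powr (-1-2*H)) \<partial>lborel)
     = ennreal (\<bar>x\<bar> powr (2*H)) * Sn H"
proof (cases "x = 0")
  case True then show ?thesis by simp
next
  case False
  define c where "c = \<bar>x\<bar>"
  have c: "0 < c" using False by (simp add: c_def)
  let ?F = "\<lambda>v. ennreal (indicator {0<..} v * (1 - cos v) * v powr (-1-2*H))"
  let ?g = "\<lambda>\<omega>. ennreal (indicator {0<..} \<omega> * (1 - cos (\<omega> * x)) * \<omega> powr (-1-2*H))"
  have "Sn H = ennreal \<bar>c\<bar> * (\<integral>\<^sup>+\<omega>. ?F (0 + c * \<omega>) \<partial>lborel)"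
    unfolding Sn_def by (rule nn_integral_real_affine) (use c in auto)
  also have "(\<lambda>\<omega>. ?F (0 + c * \<omega>)) = (\<lambda>\<omega>. ennreal (c powr (-1-2*H)) * ?g \<omega>)"
  proof
    fix \<omega>
    show "?F (0 + c * \<omega>) = ennreal (c powr (-1-2*H)) * ?g \<omega>"
    proof (cases "0 < \<omega>")
      case False
      then have "\<not> 0 < c * \<omega>" using c by (simp add: zero_less_mult_iff)
      then show ?thesis using False by simp
    next
      case True
      have cc: "cos (c * \<omega>) = cos (\<omega> * x)"
        by (cases "0 \<le> x") (auto simp: c_def mult.commute)
      have pp: "(c * \<omega>) powr (-1-2*H) = c powr (-1-2*H) * \<omega> powr (-1-2*H)"
        using c True by (simp add: powr_mult)
      have "0 \<le> 1 - cos (\<omega> * x)" by simp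
      then show ?thesis using True c cc pp
        by (simp add: ennreal_mult[symmetric] mult_ac mult_pos_pos)
    qed
  qed
  also have "(\<integral>\<^sup>+\<omega>. ennreal (c powr (-1-2*H)) * ?g \<omega> \<partial>lborel) = ennreal (c powr (-1-2*H)) * (\<integral>\<^sup>+\<omega>. ?g \<omega> \<partial>lborel)"
    by (rule nn_integral_cmult) measurable
  finally have S: "Sn H = ennreal (c * c powr (-1-2*H)) * (\<integral>\<^sup>+\<omega>. ?g \<omega> \<partial>lborel)"
    using c by (simp add: ennreal_mult mult.assoc)
  have cc: "c powr (2*H) * (c * c powr (-1-2*H)) = 1"
  proof -
    have "c * c powr (-1-2*H) = c powr 1 * c powr (-1-2*H)" using c by simp
    also have "\<dots> = c powr (1 + (-1-2*H))" by (rule powr_add[symmetric])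
    also have "\<dots> = c powr (-(2*H))" by simp
    finally have e1: "c * c powr (-1-2*H) = c powr (-(2*H))" .
    have "c powr (2*H) * c powr (-(2*H)) = c powr (2*H + -(2*H))" by (rule powr_add[symmetric])
    also have "\<dots> = 1" using c by simp
    finally show ?thesis unfolding e1 .
  qed
  have "ennreal (c powr (2*H)) * Sn H = ennreal (c powr (2*H) * (c * c powr (-1-2*H))) * (\<integral>\<^sup>+\<omega>. ?g \<omega> \<partial>lborel)"
    unfolding S using c by (simp add: ennreal_mult mult.assoc)
  also have "\<dots> = (\<integral>\<^sup>+\<omega>. ?g \<omega> \<partial>lborel)" unfolding cc by simp
  finally show ?thesis by (simp add: c_def)
qed

definition Sr :: "real \<Rightarrow> real" where "Sr H = enn2real (Sn H)"

lemma Sr_pos: "0 < H \<Longrightarrow> H < 1/2 \<Longrightarrow> 0 < Sr H"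
  unfolding Sr_def using Sn_pos Sn_finite by (simp add: enn2real_positive_iff)

lemma Sn_Sr: "0 < H \<Longrightarrow> H < 1/2 \<Longrightarrow> Sn H = ennreal (Sr H)"
  unfolding Sr_def using Sn_finite by (simp add: ennreal_enn2real_if less_top)

lemma phi_hb:
  assumes "0 < H" "H < 1/2"
  shows "has_bochner_integral lborel (\<lambda>\<omega>. indicator {0<..} \<omega> * (1 - cos (\<omega> * x)) * \<omega> powr (-1-2*H))
     (\<bar>x\<bar> powr (2*H) * Sr H)"
proof (rule has_bochner_integral_nn_integral)
  show "(\<lambda>\<omega>. indicator {0<..} \<omega> * (1 - cos (\<omega> * x)) * \<omega> powr (-1-2*H)) \<in> borel_measurable lborel"
    by measurable
  show "AE \<omega> in lborel. 0 \<le> indicator {0<..} \<omega> * (1 - cos (\<omega> * x)) * \<omega> powr (-1-2*H)" by simp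
  show "0 \<le> \<bar>x\<bar> powr (2*H) * Sr H" using Sr_pos[OF assms] by simp
  show "(\<integral>\<^sup>+\<omega>. ennreal (indicator {0<..} \<omega> * (1 - cos (\<omega> * x)) * \<omega> powr (-1-2*H)) \<partial>lborel) =
      ennreal (\<bar>x\<bar> powr (2*H) * Sr H)"
    unfolding Sn_scale Sn_Sr[OF assms] using Sr_pos[OF assms] by (simp add: ennreal_mult)
qed

lemma sq_sum_identity:
  fixes a A :: "'i \<Rightarrow> real"
  shows "(\<Sum>k\<in>I. a k * (cos (A k) - 1))\<^sup>2 + (\<Sum>k\<in>I. a k * sin (A k))\<^sup>2 =
    (\<Sum>k\<in>I. \<Sum>l\<in>I. a k * a l * ((1 - cos (A k)) + (1 - cos (A l)) - (1 - cos (A k - A l))))"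
proof -
  have "(\<Sum>k\<in>I. a k * (cos (A k) - 1))\<^sup>2 + (\<Sum>k\<in>I. a k * sin (A k))\<^sup>2 =
    (\<Sum>k\<in>I. \<Sum>l\<in>I. a k * (cos (A k) - 1) * (a l * (cos (A l) - 1))) +
    (\<Sum>k\<in>I. \<Sum>l\<in>I. a k * sin (A k) * (a l * sin (A l)))"
    by (simp add: power2_eq_square sum_product)
  also have "\<dots> = (\<Sum>k\<in>I. \<Sum>l\<in>I. a k * (cos (A k) - 1) * (a l * (cos (A l) - 1)) + a k * sin (A k) * (a l * sin (A l)))"
    by (simp add: sum.distrib)
  also have "\<dots> = (\<Sum>k\<in>I. \<Sum>l\<in>I. a k * a l * ((1 - cos (A k)) + (1 - cos (A l)) - (1 - cos (A k - A l))))"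
    by (intro sum.cong refl) (simp add: cos_diff algebra_simps)
  finally show ?thesis .
qed

lemma quad_form:
  fixes t a :: "'i \<Rightarrow> real"
  assumes H: "0 < H" "H < 1/2" and I: "finite I" and t: "\<And>k. k \<in> I \<Longrightarrow> 0 \<le> t k"
  shows "has_bochner_integral lborel
     (\<lambda>\<omega>. indicator {0<..} \<omega> * \<omega> powr (-1-2*H) * ((\<Sum>k\<in>I. a k * (cos (\<omega> * t k) - 1))\<^sup>2 + (\<Sum>k\<in>I. a k * sin (\<omega> * t k))\<^sup>2))
     (2 * Sr H * (\<Sum>k\<in>I. \<Sum>l\<in>I. a k * a l * fbm_cov H (t k) (t l)))"
proof -
  define \<phi> where "\<phi> x \<omega> = indicator {0<..} \<omega> * (1 - cos (\<omega> * x)) * \<omega> powr (-1-2*H)" for x \<omega>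
  have hb: "has_bochner_integral lborel (\<phi> x) (\<bar>x\<bar> powr (2*H) * Sr H)" for x
    unfolding \<phi>_def by (rule phi_hb[OF H])
  have big: "has_bochner_integral lborel (\<lambda>\<omega>. \<Sum>k\<in>I. \<Sum>l\<in>I. a k * a l * (\<phi> (t k) \<omega> + \<phi> (t l) \<omega> - \<phi> (t k - t l) \<omega>))
     (\<Sum>k\<in>I. \<Sum>l\<in>I. a k * a l * (\<bar>t k\<bar> powr (2*H) * Sr H + \<bar>t l\<bar> powr (2*H) * Sr H - \<bar>t k - t l\<bar> powr (2*H) * Sr H))"
    by (intro has_bochner_integral_sum has_bochner_integral_mult_right has_bochner_integral_add
        has_bochner_integral_diff hb)
  show ?thesis
  proof (rule has_bochner_integral_cong[THEN iffD1, OF refl _ _ big])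
    fix \<omega>
    have "(\<Sum>k\<in>I. \<Sum>l\<in>I. a k * a l * (\<phi> (t k) \<omega> + \<phi> (t l) \<omega> - \<phi> (t k - t l) \<omega>)) =
       (\<Sum>k\<in>I. \<Sum>l\<in>I. indicator {0<..} \<omega> * \<omega> powr (-1-2*H) * (a k * a l * ((1 - cos (\<omega> * t k)) + (1 - cos (\<omega> * t l)) - (1 - cos (\<omega> * t k - \<omega> * t l)))))"
      unfolding \<phi>_def by (intro sum.cong refl) (simp add: algebra_simps)
    also have "\<dots> = indicator {0<..} \<omega> * \<omega> powr (-1-2*H) * ((\<Sum>k\<in>I. a k * (cos (\<omega> * t k) - 1))\<^sup>2 + (\<Sum>k\<in>I. a k * sin (\<omega> * t k))\<^sup>2)"
      unfolding sq_sum_identity[of a "\<lambda>k. \<omega> * t k" I] by (simp add: sum_distrib_left)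
    finally show "(\<Sum>k\<in>I. \<Sum>l\<in>I. a k * a l * (\<phi> (t k) \<omega> + \<phi> (t l) \<omega> - \<phi> (t k - t l) \<omega>)) =
       indicator {0<..} \<omega> * \<omega> powr (-1-2*H) * ((\<Sum>k\<in>I. a k * (cos (\<omega> * t k) - 1))\<^sup>2 + (\<Sum>k\<in>I. a k * sin (\<omega> * t k))\<^sup>2)" .
  next
    show "(\<Sum>k\<in>I. \<Sum>l\<in>I. a k * a l * (\<bar>t k\<bar> powr (2*H) * Sr H + \<bar>t l\<bar> powr (2*H) * Sr H - \<bar>t k - t l\<bar> powr (2*H) * Sr H))
      = 2 * Sr H * (\<Sum>k\<in>I. \<Sum>l\<in>I. a k * a l * fbm_cov H (t k) (t l))"
      unfolding sum_distrib_left
      by (intro sum.cong refl) (simp add: fbm_cov_def t algebra_simps)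
  qed
qed



lemma quad_nonneg:
  fixes t a :: "'i \<Rightarrow> real"
  assumes H: "0 < H" "H < 1/2" and I: "finite I" and t: "\<And>k. k \<in> I \<Longrightarrow> 0 \<le> t k"
  shows "0 \<le> (\<Sum>k\<in>I. \<Sum>l\<in>I. a k * a l * fbm_cov H (t k) (t l))"
proof -
  note hb = quad_form[OF H I t, where a=a]
  have "0 \<le> 2 * Sr H * (\<Sum>k\<in>I. \<Sum>l\<in>I. a k * a l * fbm_cov H (t k) (t l))"
    using has_bochner_integral_integral_eq[OF hb, symmetric]
    by (simp add: integral_nonneg)
  then show ?thesis using Sr_pos[OF H] by (simp add: zero_le_mult_iff)
qed

lemma gauss_second_moment_nat:
  fixes t a :: "nat \<Rightarrow> real" and X :: "real \<Rightarrow> 'w \<Rightarrow> real"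
  assumes P: "prob_space M" and G: "centered_gaussian_process M {0..} X (fbm_cov H)"
    and H: "0 < H" "H < 1/2" and t: "\<And>k. k < n \<Longrightarrow> 0 \<le> t k"
  shows "(\<integral>\<^sup>+\<omega>. ennreal ((\<Sum>k<n. a k * X (t k) \<omega>)\<^sup>2) \<partial>M) =
     ennreal (\<Sum>k<n. \<Sum>l<n. a k * a l * fbm_cov H (t k) (t l))"
proof -
  interpret prob_space M by (rule P)
  define v where "v = (\<Sum>k<n. \<Sum>l<n. a k * a l * fbm_cov H (t k) (t l))"
  define Y where "Y = (\<lambda>\<omega>. \<Sum>k<n. a k * X (t k) \<omega>)"
  have v0: "0 \<le> v" unfolding v_def by (rule quad_nonneg[OF H]) (use t in auto)
  have tI: "\<forall>k<n. t k \<in> {0..}" using t by auto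
  have gp: "(v > 0 \<longrightarrow> distributed M lborel Y (normal_density 0 (sqrt v))) \<and> (v \<le> 0 \<longrightarrow> (AE \<omega> in M. Y \<omega> = 0))"
    using G tI unfolding centered_gaussian_process_def Let_def v_def Y_def by blast
  show ?thesis
  proof (cases "v > 0")
    case True
    then have D: "distributed M lborel Y (normal_density 0 (sqrt v))" using gp by blast
    have "(\<integral>\<^sup>+\<omega>. ennreal ((Y \<omega>)\<^sup>2) \<partial>M) = (\<integral>\<^sup>+x. ennreal (normal_density 0 (sqrt v) x) * ennreal (x\<^sup>2) \<partial>lborel)"
      by (rule distributed_nn_integral[OF D, symmetric]) measurable
    also have "\<dots> = (\<integral>\<^sup>+x. ennreal (normal_density 0 (sqrt v) x * (x - 0)^(2*1)) \<partial>lborel)"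
      by (intro nn_integral_cong) (simp add: ennreal_mult)
    also have "\<dots> = ennreal (fact (2 * 1) / ((2 / (sqrt v)\<^sup>2)^1 * fact 1))"
    proof -
      have hb: "has_bochner_integral lborel (\<lambda>x. normal_density 0 (sqrt v) x * (x - 0)^(2*1)) (fact (2 * 1) / ((2 / (sqrt v)\<^sup>2)^1 * fact 1))"
        by (rule normal_moment_even) (use True in simp)
      have int: "integrable lborel (\<lambda>x. normal_density 0 (sqrt v) x * (x - 0)^(2*1))"
        using hb by (rule integrable.intros)
      have "(\<integral>\<^sup>+x. ennreal (normal_density 0 (sqrt v) x * (x - 0)^(2*1)) \<partial>lborel) =
          ennreal (integral\<^sup>L lborel (\<lambda>x. normal_density 0 (sqrt v) x * (x - 0)^(2*1)))"
        by (rule nn_integral_eq_integral[OF int]) auto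
      then show ?thesis using has_bochner_integral_integral_eq[OF hb] by simp
    qed
    also have "\<dots> = ennreal v" using True by simp
    finally show ?thesis unfolding Y_def v_def .
  next
    case False
    then have "v = 0" using v0 by simp
    have "AE \<omega> in M. Y \<omega> = 0" using gp False by (simp add: not_less)
    then have "(\<integral>\<^sup>+\<omega>. ennreal ((Y \<omega>)\<^sup>2) \<partial>M) = (\<integral>\<^sup>+\<omega>. 0 \<partial>M)"
      by (intro nn_integral_cong_AE) auto
    then show ?thesis using \<open>v = 0\<close> unfolding Y_def v_def by simp
  qed
qed

lemma gauss_second_moment:
  fixes t a :: "'i \<Rightarrow> real" and X :: "real \<Rightarrow> 'w \<Rightarrow> real"
  assumes P: "prob_space M" and G: "centered_gaussian_process M {0..} X (fbm_cov H)"
    and H: "0 < H" "H < 1/2" and I: "finite I" and t: "\<And>k. k \<in> I \<Longrightarrow> 0 \<le> t k"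
  shows "(\<integral>\<^sup>+\<omega>. ennreal ((\<Sum>k\<in>I. a k * X (t k) \<omega>)\<^sup>2) \<partial>M) =
     ennreal (\<Sum>k\<in>I. \<Sum>l\<in>I. a k * a l * fbm_cov H (t k) (t l))"
proof -
  obtain e where e: "bij_betw e {0..<card I} I" using ex_bij_betw_nat_finite[OF I] by blast
  then have e': "bij_betw e {..<card I} I" by (simp add: atLeast0LessThan)
  have t': "\<And>k. k < card I \<Longrightarrow> 0 \<le> (t \<circ> e) k"
    using e' t by (auto simp: bij_betw_def)
  have s1: "(\<Sum>k\<in>I. a k * X (t k) \<omega>) = (\<Sum>k<card I. (a \<circ> e) k * X ((t \<circ> e) k) \<omega>)" for \<omega>
    using sum.reindex_bij_betw[OF e', of "\<lambda>k. a k * X (t k) \<omega>"] by simp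
  have s2: "(\<Sum>k\<in>I. \<Sum>l\<in>I. a k * a l * fbm_cov H (t k) (t l)) =
     (\<Sum>k<card I. \<Sum>l<card I. (a \<circ> e) k * (a \<circ> e) l * fbm_cov H ((t \<circ> e) k) ((t \<circ> e) l))"
    using sum.reindex_bij_betw[OF e', of "\<lambda>k. \<Sum>l\<in>I. a k * a l * fbm_cov H (t k) (t l)"]
      sum.reindex_bij_betw[OF e', of "\<lambda>l. a _ * a l * fbm_cov H (t _) (t l)"] by simp
  show ?thesis unfolding s1 s2 by (rule gauss_second_moment_nat[OF P G H t'])
qed



lemma cmod_DD_sq: "(cmod (DD n x))\<^sup>2 = (\<Sum>j<n. \<Sum>k<n. cos (x * real j - x * real k))"
proof -
  have "(cmod (DD n x))\<^sup>2 = (\<Sum>j<n. cos (x * real j))\<^sup>2 + (\<Sum>j<n. sin (x * real j))\<^sup>2"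
    by (simp add: cmod_power2 DD_def Re_sum Im_sum)
  also have "\<dots> = (\<Sum>j<n. \<Sum>k<n. cos (x * real j) * cos (x * real k) + sin (x * real j) * sin (x * real k))"
    by (simp add: power2_eq_square sum_product sum.distrib)
  also have "\<dots> = (\<Sum>j<n. \<Sum>k<n. cos (x * real j - x * real k))"
    by (simp add: cos_diff)
  finally show ?thesis .
qed

lemma cis_measurable[measurable]: "cis \<in> borel_measurable borel"
  by (rule borel_measurable_continuous_onI) (intro continuous_intros)

lemma DD_measurable[measurable]: "(\<lambda>\<omega>. DD n (f \<omega>)) \<in> borel_measurable borel" if [measurable]: "f \<in> borel_measurable borel"
  unfolding DD_def by measurable

lemma cos_period_has_integral:
  fixes j k :: nat
  assumes \<tau>: "0 < \<tau>"
  shows "((\<lambda>\<omega>. cos (((\<omega> - \<nu>) * \<tau>) * real j - ((\<omega> - \<nu>) * \<tau>) * real k)) has_integral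
     (if j = k then 2*pi/\<tau> else 0)) {c..c + 2*pi/\<tau>}"
proof (cases "j = k")
  case True
  then show ?thesis using has_integral_const_real[of "1::real" c "c + 2*pi/\<tau>"] \<tau> by simp
next
  case False
  define m where "m = real j - real k"
  have m: "m \<noteq> 0" using False by (simp add: m_def)
  have mi: "m = of_int (int j - int k)" by (simp add: m_def)
  define F where "F \<omega> = sin ((\<omega> - \<nu>) * \<tau> * m) / (\<tau> * m)" for \<omega>
  have eq: "cos (((\<omega> - \<nu>) * \<tau>) * real j - ((\<omega> - \<nu>) * \<tau>) * real k) = cos ((\<omega> - \<nu>) * \<tau> * m)" for \<omega>
    by (simp add: m_def algebra_simps)
  have d: "(F has_vector_derivative cos ((\<omega> - \<nu>) * \<tau> * m)) (at \<omega> within S)" for \<omega> S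
  proof -
    have "(F has_real_derivative (cos ((\<omega> - \<nu>) * \<tau> * m) * (\<tau> * m) / (\<tau> * m))) (at \<omega> within S)"
      unfolding F_def by (auto intro!: derivative_eq_intros)
    then show ?thesis using m \<tau> by (simp add: has_real_derivative_iff_has_vector_derivative)
  qed
  have "((\<lambda>\<omega>. cos ((\<omega> - \<nu>) * \<tau> * m)) has_integral (F (c + 2*pi/\<tau>) - F c)) {c..c + 2*pi/\<tau>}"
    by (rule fundamental_theorem_of_calculus) (use \<tau> d in auto)
  moreover have "F (c + 2*pi/\<tau>) = F c"
  proof -
    have "(c + 2*pi/\<tau> - \<nu>) * \<tau> * m = (c - \<nu>) * \<tau> * m + (2*pi) * of_int (int j - int k)"
      using \<tau> mi by (simp add: m_def algebra_simps)
    moreover have "cos (2*pi*(real j - real k)) = 1" using cos_int_2pin[of "int j - int k"] by simp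
    moreover have "sin (2*pi*(real j - real k)) = 0" using sin_int_2pin[of "int j - int k"] by simp
    ultimately show ?thesis unfolding F_def by (simp add: sin_add)
  qed
  ultimately show ?thesis using False by (simp add: eq)
qed

lemma fejer_nn:
  assumes \<tau>: "0 < \<tau>"
  shows "(\<integral>\<^sup>+\<omega>. ennreal (indicator {c..c + 2*pi/\<tau>} \<omega> * (cmod (DD n ((\<omega> - \<nu>) * \<tau>)))\<^sup>2) \<partial>lborel)
    = ennreal (real n * (2*pi/\<tau>))"
proof (rule nn_integral_has_integral_lborel)
  show "(\<lambda>\<omega>. indicator {c..c + 2*pi/\<tau>} \<omega> * (cmod (DD n ((\<omega> - \<nu>) * \<tau>)))\<^sup>2) \<in> borel_measurable borel"
    by measurable
  show "0 \<le> indicator {c..c + 2*pi/\<tau>} \<omega> * (cmod (DD n ((\<omega> - \<nu>) * \<tau>)))\<^sup>2" for \<omega> by simp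
  have "((\<lambda>\<omega>. \<Sum>j<n. \<Sum>k<n. cos (((\<omega> - \<nu>) * \<tau>) * real j - ((\<omega> - \<nu>) * \<tau>) * real k)) has_integral
      (\<Sum>j<n. \<Sum>k<n. if j = k then 2*pi/\<tau> else 0)) {c..c + 2*pi/\<tau>}"
    by (intro has_integral_sum cos_period_has_integral[OF \<tau>]) auto
  then have "((\<lambda>\<omega>. (cmod (DD n ((\<omega> - \<nu>) * \<tau>)))\<^sup>2) has_integral (real n * (2*pi/\<tau>))) {c..c + 2*pi/\<tau>}"
    by (simp add: cmod_DD_sq)
  then have "((\<lambda>\<omega>. if \<omega> \<in> {c..c + 2*pi/\<tau>} then (cmod (DD n ((\<omega> - \<nu>) * \<tau>)))\<^sup>2 else 0) has_integral (real n * (2*pi/\<tau>))) UNIV"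
    by (subst has_integral_restrict_UNIV)
  then show "((\<lambda>\<omega>. indicator {c..c + 2*pi/\<tau>} \<omega> * (cmod (DD n ((\<omega> - \<nu>) * \<tau>)))\<^sup>2) has_integral (real n * (2*pi/\<tau>))) UNIV"
    by (rule has_integral_eq_rhs[OF has_integral_cong[THEN iffD1, rotated]]) (auto simp: indicator_def)
qed



lemma ennreal_le_suminf: "f k \<le> (\<Sum>i. f i :: ennreal)"
  using sum_le_suminf[of f "{k}"] by simp

lemma period_bound:
  fixes \<phi> F :: "real \<Rightarrow> real" and B :: "nat \<Rightarrow> real"
  assumes P: "0 < P"
    and Fm[measurable]: "F \<in> borel_measurable borel" and F0: "\<And>\<omega>. 0 \<le> F \<omega>"
    and fej: "\<And>c. (\<integral>\<^sup>+\<omega>. ennreal (indicator {c..c+P} \<omega> * F \<omega>) \<partial>lborel) = ennreal I0"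
    and bnd: "\<And>k \<omega>. \<omega> \<in> {A + real k * P .. A + real k * P + P} \<Longrightarrow> \<phi> \<omega> \<le> B k"
  shows "(\<integral>\<^sup>+\<omega>. ennreal (indicator {A..} \<omega> * \<phi> \<omega> * F \<omega>) \<partial>lborel) \<le> (\<Sum>k. ennreal (B k)) * ennreal I0"
proof -
  have pw: "ennreal (indicator {A..} \<omega> * \<phi> \<omega> * F \<omega>) \<le>
      (\<Sum>k. ennreal (B k) * ennreal (indicator {A + real k * P .. A + real k * P + P} \<omega> * F \<omega>))" for \<omega>
  proof (cases "A \<le> \<omega>")
    case False then show ?thesis by simp
  next
    case True
    define r where "r = (\<omega> - A) / P"
    have r0: "0 \<le> r" using True P by (simp add: r_def)
    define k where "k = nat \<lfloor>r\<rfloor>"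
    have kr: "real k = of_int \<lfloor>r\<rfloor>" using r0 by (simp add: k_def)
    have k1: "real k \<le> r" using kr by linarith
    have k2: "r < real k + 1" using kr by linarith
    have w1: "A + real k * P \<le> \<omega>" using k1 P by (simp add: r_def field_simps)
    have w2: "\<omega> \<le> A + real k * P + P" using k2 P by (simp add: r_def field_simps)
    have wk: "\<omega> \<in> {A + real k * P .. A + real k * P + P}" using w1 w2 by simp
    have "ennreal (indicator {A..} \<omega> * \<phi> \<omega> * F \<omega>) = ennreal (\<phi> \<omega> * F \<omega>)" using True by simp
    also have "\<dots> \<le> ennreal (B k * F \<omega>)"
      using bnd[OF wk] F0[of \<omega>] by (intro ennreal_leI mult_right_mono) auto
    also have "\<dots> \<le> ennreal (B k) * ennreal (indicator {A + real k * P .. A + real k * P + P} \<omega> * F \<omega>)"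
      using wk F0[of \<omega>] by (cases "0 \<le> B k") (auto simp: ennreal_mult ennreal_neg mult_nonpos_nonneg)
    also have "\<dots> \<le> (\<Sum>k. ennreal (B k) * ennreal (indicator {A + real k * P .. A + real k * P + P} \<omega> * F \<omega>))"
      by (rule ennreal_le_suminf)
    finally show ?thesis .
  qed
  have "(\<integral>\<^sup>+\<omega>. ennreal (indicator {A..} \<omega> * \<phi> \<omega> * F \<omega>) \<partial>lborel) \<le>
     (\<integral>\<^sup>+\<omega>. (\<Sum>k. ennreal (B k) * ennreal (indicator {A + real k * P .. A + real k * P + P} \<omega> * F \<omega>)) \<partial>lborel)"
    by (rule nn_integral_mono) (rule pw)
  also have "\<dots> = (\<Sum>k. \<integral>\<^sup>+\<omega>. ennreal (B k) * ennreal (indicator {A + real k * P .. A + real k * P + P} \<omega> * F \<omega>) \<partial>lborel)"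
    by (rule nn_integral_suminf) measurable
  also have "\<dots> = (\<Sum>k. ennreal (B k) * ennreal I0)"
    by (subst nn_integral_cmult) (auto simp: fej)
  also have "\<dots> = (\<Sum>k. ennreal (B k)) * ennreal I0" by simp
  finally show ?thesis .
qed



definition Zs :: "real \<Rightarrow> real" where "Zs H = (\<Sum>k. (real k + 1) powr (-1-2*H))"

lemma Zs_summable: "0 < H \<Longrightarrow> summable (\<lambda>k. (real k + 1) powr (-1-2*H))"
proof -
  assume H: "0 < H"
  have "summable (\<lambda>k. real k powr (-1-2*H))" using H by (subst summable_real_powr_iff) auto
  then have "summable (\<lambda>k. real (Suc k) powr (-1-2*H))" by (subst summable_Suc_iff)
  then show ?thesis by (simp add: add.commute)
qed

lemma Zs_nonneg: "0 < H \<Longrightarrow> 0 \<le> Zs H"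
  unfolding Zs_def using Zs_summable by (intro suminf_nonneg) auto

lemma zeta_ennreal:
  assumes H: "0 < H" and C: "0 \<le> C" and P: "0 < P"
  shows "(\<Sum>k. ennreal (C * (P + real k * P) powr (-1-2*H))) = ennreal (C * P powr (-1-2*H) * Zs H)"
proof -
  have eq: "C * (P + real k * P) powr (-1-2*H) = C * P powr (-1-2*H) * (real k + 1) powr (-1-2*H)" for k
  proof -
    have "P + real k * P = P * (real k + 1)" by (simp add: algebra_simps)
    then show ?thesis using P by (simp add: powr_mult)
  qed
  have "(\<Sum>k. ennreal (C * (P + real k * P) powr (-1-2*H))) = ennreal (\<Sum>k. C * P powr (-1-2*H) * (real k + 1) powr (-1-2*H))"
    unfolding eq using C P by (intro suminf_ennreal2 summable_mult Zs_summable[OF H]) auto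
  also have "\<dots> = ennreal (C * P powr (-1-2*H) * Zs H)"
    unfolding Zs_def using Zs_summable[OF H] by (subst suminf_mult) auto
  finally show ?thesis .
qed

lemma tail_bound:
  assumes H: "0 < H" and C: "0 \<le> C" and \<tau>: "0 < \<tau>"
  shows "(\<integral>\<^sup>+\<omega>. ennreal (indicator {2*pi/\<tau>..} \<omega> * (C * \<omega> powr (-1-2*H)) * (cmod (DD n ((\<omega> - \<nu>) * \<tau>)))\<^sup>2) \<partial>lborel)
    \<le> ennreal (C * (2*pi/\<tau>) powr (-1-2*H) * Zs H * (real n * (2*pi/\<tau>)))"
proof -
  let ?P = "2*pi/\<tau>"
  have P: "0 < ?P" using \<tau> by simp
  have "(\<integral>\<^sup>+\<omega>. ennreal (indicator {?P..} \<omega> * (C * \<omega> powr (-1-2*H)) * (cmod (DD n ((\<omega> - \<nu>) * \<tau>)))\<^sup>2) \<partial>lborel)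
    \<le> (\<Sum>k. ennreal (C * (?P + real k * ?P) powr (-1-2*H))) * ennreal (real n * ?P)"
  proof (rule period_bound[OF P])
    show "(\<lambda>\<omega>. (cmod (DD n ((\<omega> - \<nu>) * \<tau>)))\<^sup>2) \<in> borel_measurable borel" by measurable
    show "0 \<le> (cmod (DD n ((\<omega> - \<nu>) * \<tau>)))\<^sup>2" for \<omega> by simp
    show "(\<integral>\<^sup>+\<omega>. ennreal (indicator {c..c + ?P} \<omega> * (cmod (DD n ((\<omega> - \<nu>) * \<tau>)))\<^sup>2) \<partial>lborel) = ennreal (real n * ?P)" for c
      by (rule fejer_nn[OF \<tau>])
    fix k \<omega> assume w: "\<omega> \<in> {?P + real k * ?P .. ?P + real k * ?P + ?P}"
    have "0 \<le> real k * ?P" using P by (intro mult_nonneg_nonneg) auto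
    then have p0: "0 < ?P + real k * ?P" by (rule add_pos_nonneg[OF P])
    have "\<omega> powr (-1-2*H) \<le> (?P + real k * ?P) powr (-1-2*H)"
      using w H p0 by (intro powr_mono2') auto
    then show "C * \<omega> powr (-1-2*H) \<le> C * (?P + real k * ?P) powr (-1-2*H)"
      using C by (rule mult_left_mono)
  qed
  also have "\<dots> = ennreal (C * ?P powr (-1-2*H) * Zs H * (real n * ?P))"
    unfolding zeta_ennreal[OF H C P] by (rule ennreal_mult[symmetric]) (use C P Zs_nonneg[OF H] \<tau> in \<open>auto intro!: mult_nonneg_nonneg\<close>)
  finally show ?thesis .
qed

lemma uniform_bound:
  assumes H: "0 < H" "H < 1/2" and \<tau>: "0 < \<tau>"
  shows "(\<integral>\<^sup>+\<omega>. ennreal (indicator {0<..} \<omega> * \<omega> powr (-1-2*H) * (cmod (GG n \<tau> \<nu> \<omega>))\<^sup>2) \<partial>lborel)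
    \<le> ennreal ((2*pi/\<tau>) powr (1-2*H) * \<tau>^4 * (real n * (2*pi/\<tau>))
        + 4 * \<tau>\<^sup>2 * (2*pi/\<tau>) powr (-1-2*H) * Zs H * (real n * (2*pi/\<tau>)))"
proof -
  let ?P = "2*pi/\<tau>"
  let ?D = "\<lambda>\<omega>. (cmod (DD n ((\<omega> - \<nu>) * \<tau>)))\<^sup>2"
  have P: "0 < ?P" using \<tau> by simp
  have pw: "ennreal (indicator {0<..} \<omega> * \<omega> powr (-1-2*H) * (cmod (GG n \<tau> \<nu> \<omega>))\<^sup>2) \<le>
     ennreal (indicator {0..0+?P} \<omega> * ?D \<omega>) * ennreal (?P powr (1-2*H) * \<tau>^4) +
     ennreal (indicator {?P..} \<omega> * (4 * \<tau>\<^sup>2 * \<omega> powr (-1-2*H)) * ?D \<omega>)" for \<omega>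
  proof -
    have G2: "(cmod (GG n \<tau> \<nu> \<omega>))\<^sup>2 = ?D \<omega> * (cmod (bb \<tau> \<nu> \<omega>))\<^sup>2"
      by (simp add: GG_def norm_mult power_mult_distrib)
    show ?thesis
    proof (cases "0 < \<omega>")
      case False then show ?thesis by simp
    next
      case w0: True
      show ?thesis
      proof (cases "\<omega> \<le> ?P")
        case True
        have "(cmod (bb \<tau> \<nu> \<omega>))\<^sup>2 \<le> (\<omega> * \<tau>\<^sup>2)\<^sup>2"
          using norm_bb2[of \<tau> \<nu> \<omega>] \<tau> w0 by (intro power_mono) auto
        then have "\<omega> powr (-1-2*H) * (cmod (bb \<tau> \<nu> \<omega>))\<^sup>2 \<le> \<omega> powr (-1-2*H) * (\<omega> * \<tau>\<^sup>2)\<^sup>2"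
          by (intro mult_left_mono) auto
        also have "\<dots> = \<omega> powr (1-2*H) * \<tau>^4"
        proof -
          have "\<omega> powr (-1-2*H) * \<omega>\<^sup>2 = \<omega> powr (1-2*H)"
          proof -
            have "\<omega> powr (1-2*H) = \<omega> powr ((-1-2*H) + 2)" by (intro arg_cong[where f="(powr) \<omega>"]) simp
            also have "\<dots> = \<omega> powr (-1-2*H) * \<omega> powr 2" by (rule powr_add)
            also have "\<dots> = \<omega> powr (-1-2*H) * \<omega>\<^sup>2" using w0 by (simp add: powr_numeral)
            finally show ?thesis by simp
          qed
          moreover have "(\<omega> * \<tau>\<^sup>2)\<^sup>2 = \<omega>\<^sup>2 * \<tau>^4" by (simp add: power_mult_distrib power_mult[symmetric])
          ultimately show ?thesis by (simp only: mult.assoc[symmetric])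
        qed
        also have "\<dots> \<le> ?P powr (1-2*H) * \<tau>^4"
          using True w0 H by (intro mult_right_mono powr_mono2) auto
        finally have b: "\<omega> powr (-1-2*H) * (cmod (bb \<tau> \<nu> \<omega>))\<^sup>2 \<le> ?P powr (1-2*H) * \<tau>^4" .
        have "indicator {0<..} \<omega> * \<omega> powr (-1-2*H) * (cmod (GG n \<tau> \<nu> \<omega>))\<^sup>2
            = ?D \<omega> * (\<omega> powr (-1-2*H) * (cmod (bb \<tau> \<nu> \<omega>))\<^sup>2)" using w0 G2 by simp
        also have "\<dots> \<le> ?D \<omega> * (?P powr (1-2*H) * \<tau>^4)" using b by (intro mult_left_mono) auto
        finally have "ennreal (indicator {0<..} \<omega> * \<omega> powr (-1-2*H) * (cmod (GG n \<tau> \<nu> \<omega>))\<^sup>2) \<le>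
            ennreal (indicator {0..0+?P} \<omega> * ?D \<omega>) * ennreal (?P powr (1-2*H) * \<tau>^4)"
          using True w0 by (simp add: ennreal_mult[symmetric] ennreal_leI)
        then show ?thesis by (rule order_trans) simp
      next
        case False
        have "(cmod (bb \<tau> \<nu> \<omega>))\<^sup>2 \<le> (2 * \<tau>)\<^sup>2"
          using norm_bb1[of \<tau> \<nu> \<omega>] \<tau> by (intro power_mono) auto
        then have "(cmod (bb \<tau> \<nu> \<omega>))\<^sup>2 * ?D \<omega> \<le> (2 * \<tau>)\<^sup>2 * ?D \<omega>"
          by (rule mult_right_mono) auto
        then have le: "\<omega> powr (-1-2*H) * ((cmod (bb \<tau> \<nu> \<omega>))\<^sup>2 * ?D \<omega>) \<le> \<omega> powr (-1-2*H) * ((2 * \<tau>)\<^sup>2 * ?D \<omega>)"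
          by (rule mult_left_mono) auto
        have e1: "indicator {0<..} \<omega> * \<omega> powr (-1-2*H) * (cmod (GG n \<tau> \<nu> \<omega>))\<^sup>2 =
            \<omega> powr (-1-2*H) * ((cmod (bb \<tau> \<nu> \<omega>))\<^sup>2 * ?D \<omega>)" using w0 G2 by (simp add: mult_ac)
        have e2: "\<omega> powr (-1-2*H) * ((2 * \<tau>)\<^sup>2 * ?D \<omega>) = indicator {?P..} \<omega> * (4 * \<tau>\<^sup>2 * \<omega> powr (-1-2*H)) * ?D \<omega>"
          using False by (simp add: power_mult_distrib mult_ac)
        have "indicator {0<..} \<omega> * \<omega> powr (-1-2*H) * (cmod (GG n \<tau> \<nu> \<omega>))\<^sup>2
           \<le> indicator {?P..} \<omega> * (4 * \<tau>\<^sup>2 * \<omega> powr (-1-2*H)) * ?D \<omega>"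
          unfolding e1 e2[symmetric] by (rule le)
        then show ?thesis by (intro order_trans[OF _ add_increasing]) (auto intro: ennreal_leI)
      qed
    qed
  qed
  have "(\<integral>\<^sup>+\<omega>. ennreal (indicator {0<..} \<omega> * \<omega> powr (-1-2*H) * (cmod (GG n \<tau> \<nu> \<omega>))\<^sup>2) \<partial>lborel)
     \<le> (\<integral>\<^sup>+\<omega>. ennreal (indicator {0..0+?P} \<omega> * ?D \<omega>) * ennreal (?P powr (1-2*H) * \<tau>^4) +
     ennreal (indicator {?P..} \<omega> * (4 * \<tau>\<^sup>2 * \<omega> powr (-1-2*H)) * ?D \<omega>) \<partial>lborel)"
    by (rule nn_integral_mono) (rule pw)
  also have "\<dots> = (\<integral>\<^sup>+\<omega>. ennreal (indicator {0..0+?P} \<omega> * ?D \<omega>) \<partial>lborel) * ennreal (?P powr (1-2*H) * \<tau>^4) +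
     (\<integral>\<^sup>+\<omega>. ennreal (indicator {?P..} \<omega> * (4 * \<tau>\<^sup>2 * \<omega> powr (-1-2*H)) * ?D \<omega>) \<partial>lborel)"
    by (subst nn_integral_add) (auto simp: nn_integral_multc)
  also have "\<dots> \<le> ennreal (real n * ?P) * ennreal (?P powr (1-2*H) * \<tau>^4) +
     ennreal (4 * \<tau>\<^sup>2 * ?P powr (-1-2*H) * Zs H * (real n * ?P))"
    unfolding fejer_nn[OF \<tau>] using tail_bound[OF H(1) _ \<tau>, of "4 * \<tau>\<^sup>2" n \<nu>] by (intro add_mono) auto
  also have "\<dots> = ennreal (?P powr (1-2*H) * \<tau>^4 * (real n * ?P) + 4 * \<tau>\<^sup>2 * ?P powr (-1-2*H) * Zs H * (real n * ?P))"
  proof -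
    have nP: "0 \<le> real n * ?P" using P by (intro mult_nonneg_nonneg) auto
    have c0: "0 \<le> ?P powr (1-2*H) * \<tau>^4" using \<tau> by simp
    have B0: "0 \<le> 4 * \<tau>\<^sup>2 * ?P powr (-1-2*H) * Zs H * (real n * ?P)"
      using Zs_nonneg[OF H(1)] nP \<tau> by (intro mult_nonneg_nonneg) auto
    have "ennreal (real n * ?P) * ennreal (?P powr (1-2*H) * \<tau>^4) = ennreal (?P powr (1-2*H) * \<tau>^4 * (real n * ?P))"
      using ennreal_mult[OF nP c0] by (simp add: mult.commute)
    then show ?thesis using ennreal_plus[OF mult_nonneg_nonneg[OF c0 nP] B0] by simp
  qed
  finally show ?thesis .
qed



definition mm :: "real \<Rightarrow> real \<Rightarrow> real" where
  "mm T x = (if \<bar>x\<bar> \<le> 2 / T then T\<^sup>2 else 4 / x\<^sup>2)"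

lemma mm_measurable[measurable]: "mm T \<in> borel_measurable borel"
  unfolding mm_def by measurable

lemma mm_nonneg: "0 \<le> mm T x" by (simp add: mm_def)

lemma mm_le: assumes "0 < T" "x \<noteq> 0" shows "mm T x \<le> 4 / x\<^sup>2"
proof (cases "\<bar>x\<bar> \<le> 2 / T")
  case True
  then have "T * \<bar>x\<bar> \<le> 2" using assms by (simp add: field_simps)
  then have "(T * \<bar>x\<bar>)\<^sup>2 \<le> 2\<^sup>2" by (intro power_mono) (use assms in auto)
  then have "T\<^sup>2 * x\<^sup>2 \<le> 4" by (simp add: power_mult_distrib)
  then show ?thesis using True assms by (simp add: mm_def field_simps)
qed (simp add: mm_def)

lemma norm_ffn_sq: assumes "0 < T" "0 \<le> \<tau>" "real n * \<tau> \<le> T"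
  shows "(cmod (ff (real n * \<tau>) k))\<^sup>2 \<le> mm T k"
proof (cases "\<bar>k\<bar> \<le> 2 / T")
  case True
  have "cmod (ff (real n * \<tau>) k) \<le> T" using norm_ff_le[of "real n * \<tau>" k] assms by simp
  then have "(cmod (ff (real n * \<tau>) k))\<^sup>2 \<le> T\<^sup>2" by (intro power_mono) auto
  then show ?thesis using True by (simp add: mm_def)
next
  case False
  then have k: "k \<noteq> 0" using assms by auto
  have "cmod (ff (real n * \<tau>) k) \<le> 2 / \<bar>k\<bar>" by (rule norm_ff_le2[OF k])
  then have "(cmod (ff (real n * \<tau>) k))\<^sup>2 \<le> (2 / \<bar>k\<bar>)\<^sup>2" by (intro power_mono) auto
  then show ?thesis using False by (simp add: mm_def power_divide)
qed

lemma nn_integral_mm0: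
  assumes T: "0 < T"
  shows "(\<integral>\<^sup>+x. ennreal (mm T x) \<partial>lborel) \<le> ennreal (8 * T)"
proof -
  define a where "a = 2 / T"
  have a: "0 < a" using T by (simp add: a_def)
  have pw: "ennreal (mm T x) \<le> ennreal (T\<^sup>2) * indicator {-a..a} x +
     ennreal (indicator {a..} x * (4 * x powr (-2))) + ennreal (indicator {a..} (-x) * (4 * (-x) powr (-2)))" for x
  proof (cases "\<bar>x\<bar> \<le> a")
    case True then show ?thesis by (simp add: mm_def a_def abs_le_iff)
  next
    case False
    then have x0: "x \<noteq> 0" using a by auto
    have "mm T x = 4 / x\<^sup>2" using False by (simp add: mm_def a_def)
    show ?thesis
    proof (cases "0 < x")
      case True
      then have "mm T x = indicator {a..} x * (4 * x powr (-2))"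
        using False \<open>mm T x = 4 / x\<^sup>2\<close> by (simp add: powr_minus powr_numeral divide_inverse)
      then show ?thesis by (simp add: add_increasing2)
    next
      case False
      then have "mm T x = indicator {a..} (-x) * (4 * (-x) powr (-2))"
        using \<open>\<not> \<bar>x\<bar> \<le> a\<close> \<open>mm T x = 4 / x\<^sup>2\<close> x0 by (simp add: powr_minus powr_numeral divide_inverse)
      then show ?thesis by (simp add: add_increasing)
    qed
  qed
  have I3: "(\<integral>\<^sup>+x. ennreal (indicator {a..} x * (4 * x powr (-2))) \<partial>lborel) = ennreal (4 * (a powr (-1)))"
  proof -
    have "(\<integral>\<^sup>+x. ennreal (indicator {a..} x * (4 * x powr (-2))) \<partial>lborel) =
        (\<integral>\<^sup>+x. ennreal 4 * ennreal (indicator {a..} x * x powr (-2)) \<partial>lborel)"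
      by (intro nn_integral_cong) (simp add: ennreal_mult mult.left_commute)
    also have "\<dots> = ennreal 4 * (\<integral>\<^sup>+x. ennreal (indicator {a..} x * x powr (-2)) \<partial>lborel)"
      by (rule nn_integral_cmult) measurable
    also have "\<dots> = ennreal 4 * ennreal (-(a powr (-2+1)) / (-2+1))"
      using nn_integral_powr_inf[of "-2" a] a by simp
    finally show ?thesis by (subst ennreal_mult) auto
  qed
  have I4: "(\<integral>\<^sup>+x. ennreal (indicator {a..} (-x) * (4 * (-x) powr (-2))) \<partial>lborel) = ennreal (4 * (a powr (-1)))"
  proof -
    have "(\<integral>\<^sup>+x. ennreal (indicator {a..} x * (4 * x powr (-2))) \<partial>lborel) =
       ennreal \<bar>-1::real\<bar> * (\<integral>\<^sup>+x. ennreal (indicator {a..} (0 + -1 * x) * (4 * (0 + -1 * x) powr (-2))) \<partial>lborel)"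
      by (rule nn_integral_real_affine) auto
    then show ?thesis using I3 by simp
  qed
  have "(\<integral>\<^sup>+x. ennreal (mm T x) \<partial>lborel) \<le> (\<integral>\<^sup>+x. ennreal (T\<^sup>2) * indicator {-a..a} x +
     ennreal (indicator {a..} x * (4 * x powr (-2))) + ennreal (indicator {a..} (-x) * (4 * (-x) powr (-2))) \<partial>lborel)"
    by (rule nn_integral_mono) (rule pw)
  also have "\<dots> = (\<integral>\<^sup>+x. ennreal (T\<^sup>2) * indicator {-a..a} x \<partial>lborel) +
     (\<integral>\<^sup>+x. ennreal (indicator {a..} x * (4 * x powr (-2))) \<partial>lborel) + (\<integral>\<^sup>+x. ennreal (indicator {a..} (-x) * (4 * (-x) powr (-2))) \<partial>lborel)"
    by (subst nn_integral_add, measurable, subst nn_integral_add) auto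
  also have "\<dots> = ennreal (T\<^sup>2) * ennreal (2 * a) + ennreal (4 * (a powr (-1))) + ennreal (4 * (a powr (-1)))"
    unfolding I3 I4 using a by (subst nn_integral_cmult_indicator) auto
  also have "\<dots> = ennreal (8 * T)"
  proof -
    have "T\<^sup>2 * (2 * a) = 4 * T" using T by (simp add: a_def power2_eq_square)
    moreover have "4 * (a powr (-1)) = 2 * T" using T a by (simp add: a_def powr_minus)
    ultimately show ?thesis using T a
      by (simp add: ennreal_mult[symmetric] ennreal_plus[symmetric] del: ennreal_plus)
  qed
  finally show ?thesis .
qed

lemma nn_integral_mm:
  assumes T: "0 < T"
  shows "(\<integral>\<^sup>+x. ennreal (mm T (x - \<nu>)) \<partial>lborel) \<le> ennreal (8 * T)"
proof -
  have "(\<integral>\<^sup>+x. ennreal (mm T x) \<partial>lborel) = ennreal \<bar>1::real\<bar> * (\<integral>\<^sup>+x. ennreal (mm T (- \<nu> + 1 * x)) \<partial>lborel)"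
    by (rule nn_integral_real_affine) auto
  then show ?thesis using nn_integral_mm0[OF T] by simp
qed



lemma ennreal_le_sum4:
  assumes "x \<le> a + b + c + d" "0 \<le> a" "0 \<le> b" "0 \<le> c" "0 \<le> d"
  shows "ennreal x \<le> ennreal a + ennreal b + ennreal c + ennreal d"
  using assms by (simp add: ennreal_plus[symmetric] ennreal_leI del: ennreal_plus)

lemma power2_sum_le_2: "(x + y)\<^sup>2 \<le> 2 * x\<^sup>2 + 2 * (y::real)\<^sup>2"
proof -
  have "0 \<le> (x - y)\<^sup>2" by simp
  then show ?thesis unfolding power2_sum power2_diff by linarith
qed

lemma decay_pointwise:
  assumes H: "0 < H" "H < 1/2" and \<tau>: "0 < \<tau>" and T: "0 < T" and nT: "real n * \<tau> \<le> T" and \<nu>: "\<nu> \<noteq> 0"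
  defines "P \<equiv> 2*pi/\<tau>" and "e \<equiv> -1-2*H"
  shows "indicator {0<..} \<omega> * \<omega> powr e * (cmod (GG n \<tau> \<nu> \<omega>))\<^sup>2 \<le>
     indicator {0..0+P} \<omega> * (cmod (DD n ((\<omega> - \<nu>) * \<tau>)))\<^sup>2 * (4 * \<tau>\<^sup>2 / \<nu>\<^sup>2 * P powr (1-2*H))
     + indicator {P..} \<omega> * (8 / \<nu>\<^sup>2 * \<omega> powr e) * (cmod (DD n ((\<omega> - \<nu>) * \<tau>)))\<^sup>2
     + 32 / \<nu>\<^sup>2 * (indicator {P..} \<omega> * \<omega> powr e)
     + 2 * (\<bar>\<nu>\<bar>/2) powr e * mm T (\<omega> - \<nu>)"
  (is "?L \<le> ?A + ?B + ?C + ?E")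
proof -
  let ?D = "(cmod (DD n ((\<omega> - \<nu>) * \<tau>)))\<^sup>2"
  have P: "0 < P" using \<tau> by (simp add: P_def)
  have e: "e \<le> 0" using H by (simp add: e_def)
  have A0: "0 \<le> ?A" using P by simp
  have B0: "0 \<le> ?B" by simp
  have C0: "0 \<le> ?C" by simp
  have E0: "0 \<le> ?E" by (simp add: mm_nonneg)
  have G2: "(cmod (GG n \<tau> \<nu> \<omega>))\<^sup>2 = ?D * (cmod (bb \<tau> \<nu> \<omega>))\<^sup>2"
    by (simp add: GG_def norm_mult power_mult_distrib)
  show ?thesis
  proof (cases "0 < \<omega>")
    case False then show ?thesis using A0 B0 C0 E0 by simp
  next
    case w0: True
    show ?thesis
    proof (cases "\<omega> \<le> P")
      case True
      have "(cmod (bb \<tau> \<nu> \<omega>))\<^sup>2 \<le> (2 * \<bar>\<omega>\<bar> * \<tau> / \<bar>\<nu>\<bar>)\<^sup>2"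
        using norm_bb3[OF \<nu>, of \<tau> \<omega>] \<tau> by (intro power_mono) auto
      also have "\<dots> = 4 * \<tau>\<^sup>2 / \<nu>\<^sup>2 * \<omega>\<^sup>2" using w0 by (simp add: power_divide power_mult_distrib)
      finally have bb2: "(cmod (bb \<tau> \<nu> \<omega>))\<^sup>2 \<le> 4 * \<tau>\<^sup>2 / \<nu>\<^sup>2 * \<omega>\<^sup>2" .
      have ww: "\<omega> powr e * \<omega>\<^sup>2 = \<omega> powr (1-2*H)"
      proof -
        have "\<omega> powr (1-2*H) = \<omega> powr (e + 2)" by (intro arg_cong[where f="(powr) \<omega>"]) (simp add: e_def)
        also have "\<dots> = \<omega> powr e * \<omega> powr 2" by (rule powr_add)
        also have "\<dots> = \<omega> powr e * \<omega>\<^sup>2" using w0 by (simp add: powr_numeral)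
        finally show ?thesis by simp
      qed
      have "\<omega> powr e * (cmod (bb \<tau> \<nu> \<omega>))\<^sup>2 \<le> \<omega> powr e * (4 * \<tau>\<^sup>2 / \<nu>\<^sup>2 * \<omega>\<^sup>2)"
        using bb2 by (intro mult_left_mono) auto
      also have "\<dots> = 4 * \<tau>\<^sup>2 / \<nu>\<^sup>2 * \<omega> powr (1-2*H)" using ww by (simp add: mult_ac)
      also have "\<dots> \<le> 4 * \<tau>\<^sup>2 / \<nu>\<^sup>2 * P powr (1-2*H)"
        using True w0 H by (intro mult_left_mono powr_mono2) auto
      finally have b: "\<omega> powr e * (cmod (bb \<tau> \<nu> \<omega>))\<^sup>2 \<le> 4 * \<tau>\<^sup>2 / \<nu>\<^sup>2 * P powr (1-2*H)" .
      have "?L = ?D * (\<omega> powr e * (cmod (bb \<tau> \<nu> \<omega>))\<^sup>2)" using w0 G2 by (simp add: mult_ac)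
      also have "\<dots> \<le> ?D * (4 * \<tau>\<^sup>2 / \<nu>\<^sup>2 * P powr (1-2*H))" using b by (intro mult_left_mono) auto
      also have "\<dots> = ?A" using True w0 by simp
      finally show ?thesis using B0 C0 E0 by linarith
    next
      case False
      have GGe: "GG n \<tau> \<nu> \<omega> = ff (real n * \<tau>) (\<omega> - \<nu>) - DD n ((\<omega> - \<nu>) * \<tau>) * ff \<tau> (-\<nu>)"
        unfolding GG_def bb_def by (simp add: right_diff_distrib DD_ff)
      have f1: "(cmod (ff (real n * \<tau>) (\<omega> - \<nu>)))\<^sup>2 \<le> mm T (\<omega> - \<nu>)"
        by (rule norm_ffn_sq[OF T _ nT]) (use \<tau> in simp)
      have f2: "(cmod (ff \<tau> (-\<nu>)))\<^sup>2 \<le> 4 / \<nu>\<^sup>2"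
      proof -
        have "cmod (ff \<tau> (-\<nu>)) \<le> 2 / \<bar>\<nu>\<bar>" using norm_ff_le2[of "-\<nu>" \<tau>] \<nu> by simp
        then have "(cmod (ff \<tau> (-\<nu>)))\<^sup>2 \<le> (2 / \<bar>\<nu>\<bar>)\<^sup>2" by (intro power_mono) auto
        then show ?thesis by (simp add: power_divide)
      qed
      have "(cmod (GG n \<tau> \<nu> \<omega>))\<^sup>2 \<le> (cmod (ff (real n * \<tau>) (\<omega> - \<nu>)) + cmod (DD n ((\<omega> - \<nu>) * \<tau>) * ff \<tau> (-\<nu>)))\<^sup>2"
        unfolding GGe by (intro power_mono norm_triangle_ineq4) auto
      also have "\<dots> \<le> 2 * (cmod (ff (real n * \<tau>) (\<omega> - \<nu>)))\<^sup>2 + 2 * (cmod (DD n ((\<omega> - \<nu>) * \<tau>) * ff \<tau> (-\<nu>)))\<^sup>2"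
        by (rule power2_sum_le_2)
      also have "\<dots> = 2 * (cmod (ff (real n * \<tau>) (\<omega> - \<nu>)))\<^sup>2 + 2 * (?D * (cmod (ff \<tau> (-\<nu>)))\<^sup>2)"
        by (simp add: norm_mult power_mult_distrib)
      also have "\<dots> \<le> 2 * mm T (\<omega> - \<nu>) + 2 * (?D * (4 / \<nu>\<^sup>2))"
        using f1 f2 by (intro add_mono mult_left_mono) auto
      finally have g: "(cmod (GG n \<tau> \<nu> \<omega>))\<^sup>2 \<le> 2 * mm T (\<omega> - \<nu>) + 8 / \<nu>\<^sup>2 * ?D" by simp
      have wm: "\<omega> powr e * (2 * mm T (\<omega> - \<nu>)) \<le> 32 / \<nu>\<^sup>2 * \<omega> powr e + 2 * (\<bar>\<nu>\<bar>/2) powr e * mm T (\<omega> - \<nu>)"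
      proof (cases "\<omega> < \<bar>\<nu>\<bar>/2")
        case True
        have k0: "\<bar>\<nu>\<bar>/2 \<le> \<bar>\<omega> - \<nu>\<bar>" using True w0 by linarith
        then have k1: "\<omega> - \<nu> \<noteq> 0" using \<nu> by auto
        have "(\<bar>\<nu>\<bar>/2)\<^sup>2 \<le> \<bar>\<omega> - \<nu>\<bar>\<^sup>2" using k0 by (intro power_mono) auto
        then have k2: "\<nu>\<^sup>2 / 4 \<le> (\<omega> - \<nu>)\<^sup>2" by (simp add: power_divide)
        have "mm T (\<omega> - \<nu>) \<le> 4 / (\<omega> - \<nu>)\<^sup>2" by (rule mm_le[OF T k1])
        also have "\<dots> \<le> 4 / (\<nu>\<^sup>2 / 4)" using k2 \<nu> k1 by (intro divide_left_mono) auto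
        also have "\<dots> = 16 / \<nu>\<^sup>2" by simp
        finally have "\<omega> powr e * (2 * mm T (\<omega> - \<nu>)) \<le> \<omega> powr e * (2 * (16 / \<nu>\<^sup>2))"
          by (intro mult_left_mono) auto
        moreover have "\<omega> powr e * (2 * (16 / \<nu>\<^sup>2)) = 32 / \<nu>\<^sup>2 * \<omega> powr e" by simp
        moreover have "0 \<le> 2 * (\<bar>\<nu>\<bar>/2) powr e * mm T (\<omega> - \<nu>)" using mm_nonneg[of T "\<omega> - \<nu>"] by simp
        ultimately show ?thesis by linarith
      next
        case False
        have "\<omega> powr e \<le> (\<bar>\<nu>\<bar>/2) powr e" using False e \<nu> by (intro powr_mono2') auto
        then have "\<omega> powr e * (2 * mm T (\<omega> - \<nu>)) \<le> (\<bar>\<nu>\<bar>/2) powr e * (2 * mm T (\<omega> - \<nu>))"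
          using mm_nonneg[of T "\<omega> - \<nu>"] by (intro mult_right_mono) auto
        moreover have "(\<bar>\<nu>\<bar>/2) powr e * (2 * mm T (\<omega> - \<nu>)) = 2 * (\<bar>\<nu>\<bar>/2) powr e * mm T (\<omega> - \<nu>)" by simp
        moreover have "0 \<le> 32 / \<nu>\<^sup>2 * \<omega> powr e" by simp
        ultimately show ?thesis by linarith
      qed
      have "?L = \<omega> powr e * (cmod (GG n \<tau> \<nu> \<omega>))\<^sup>2" using w0 by simp
      also have "\<dots> \<le> \<omega> powr e * (2 * mm T (\<omega> - \<nu>) + 8 / \<nu>\<^sup>2 * ?D)" using g by (intro mult_left_mono) auto
      also have "\<dots> = \<omega> powr e * (2 * mm T (\<omega> - \<nu>)) + \<omega> powr e * (8 / \<nu>\<^sup>2 * ?D)" by (simp add: algebra_simps)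
      also have "\<dots> \<le> 32 / \<nu>\<^sup>2 * \<omega> powr e + 2 * (\<bar>\<nu>\<bar>/2) powr e * mm T (\<omega> - \<nu>) + \<omega> powr e * (8 / \<nu>\<^sup>2 * ?D)"
        using wm by simp
      also have "\<dots> = ?B + ?C + ?E" using False w0 by (simp add: mult_ac)
      finally show ?thesis using A0 by linarith
    qed
  qed
qed



lemma ennreal_sum4: "0 \<le> a \<Longrightarrow> 0 \<le> b \<Longrightarrow> 0 \<le> c \<Longrightarrow> 0 \<le> d \<Longrightarrow>
  ennreal a + ennreal b + ennreal c + ennreal d = ennreal (a + b + c + d)"
  by (simp add: ennreal_plus[symmetric] del: ennreal_plus)

lemma decay_bound:
  assumes H: "0 < H" "H < 1/2" and \<tau>: "0 < \<tau>" and T: "0 < T" and nT: "real n * \<tau> \<le> T" and \<nu>: "\<nu> \<noteq> 0"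
  shows "(\<integral>\<^sup>+\<omega>. ennreal (indicator {0<..} \<omega> * \<omega> powr (-1-2*H) * (cmod (GG n \<tau> \<nu> \<omega>))\<^sup>2) \<partial>lborel)
    \<le> ennreal (real n * (2*pi/\<tau>) * (4 * \<tau>\<^sup>2 / \<nu>\<^sup>2 * (2*pi/\<tau>) powr (1-2*H))
       + 8 / \<nu>\<^sup>2 * (2*pi/\<tau>) powr (-1-2*H) * Zs H * (real n * (2*pi/\<tau>))
       + 32 / \<nu>\<^sup>2 * (-((2*pi/\<tau>) powr (-1-2*H+1)) / (-1-2*H+1))
       + 2 * (\<bar>\<nu>\<bar>/2) powr (-1-2*H) * (8 * T))"
proof -
  define P where "P = 2*pi/\<tau>"
  define e where "e = -1-2*H"
  let ?D = "\<lambda>\<omega>. (cmod (DD n ((\<omega> - \<nu>) * \<tau>)))\<^sup>2"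
  define c1 where "c1 = 4 * \<tau>\<^sup>2 / \<nu>\<^sup>2 * P powr (1-2*H)"
  have P: "0 < P" using \<tau> by (simp add: P_def)
  have c1: "0 \<le> c1" by (simp add: c1_def)
  have e1: "e < -1" using H by (simp add: e_def)
  have pw: "ennreal (indicator {0<..} \<omega> * \<omega> powr e * (cmod (GG n \<tau> \<nu> \<omega>))\<^sup>2) \<le>
      ennreal (indicator {0..0+P} \<omega> * ?D \<omega>) * ennreal c1
    + ennreal (indicator {P..} \<omega> * (8 / \<nu>\<^sup>2 * \<omega> powr e) * ?D \<omega>)
    + ennreal (32 / \<nu>\<^sup>2) * ennreal (indicator {P..} \<omega> * \<omega> powr e)
    + ennreal (2 * (\<bar>\<nu>\<bar>/2) powr e) * ennreal (mm T (\<omega> - \<nu>))" for \<omega>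
  proof -
    have "ennreal (indicator {0<..} \<omega> * \<omega> powr e * (cmod (GG n \<tau> \<nu> \<omega>))\<^sup>2) \<le>
      ennreal (indicator {0..0+P} \<omega> * ?D \<omega> * c1)
    + ennreal (indicator {P..} \<omega> * (8 / \<nu>\<^sup>2 * \<omega> powr e) * ?D \<omega>)
    + ennreal (32 / \<nu>\<^sup>2 * (indicator {P..} \<omega> * \<omega> powr e))
    + ennreal (2 * (\<bar>\<nu>\<bar>/2) powr e * mm T (\<omega> - \<nu>))"
      by (rule ennreal_le_sum4[OF decay_pointwise[OF H \<tau> T nT \<nu>, of \<omega>, folded P_def e_def, folded c1_def]])
        (use P c1 mm_nonneg in auto)
    moreover have "ennreal (indicator {0..0+P} \<omega> * ?D \<omega> * c1) = ennreal (indicator {0..0+P} \<omega> * ?D \<omega>) * ennreal c1"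
      by (rule ennreal_mult) (use c1 in auto)
    moreover have "ennreal (32 / \<nu>\<^sup>2 * (indicator {P..} \<omega> * \<omega> powr e)) = ennreal (32 / \<nu>\<^sup>2) * ennreal (indicator {P..} \<omega> * \<omega> powr e)"
      by (rule ennreal_mult) auto
    moreover have "ennreal (2 * (\<bar>\<nu>\<bar>/2) powr e * mm T (\<omega> - \<nu>)) = ennreal (2 * (\<bar>\<nu>\<bar>/2) powr e) * ennreal (mm T (\<omega> - \<nu>))"
      by (rule ennreal_mult) (auto simp: mm_nonneg)
    ultimately show ?thesis by simp
  qed
  have "(\<integral>\<^sup>+\<omega>. ennreal (indicator {0<..} \<omega> * \<omega> powr e * (cmod (GG n \<tau> \<nu> \<omega>))\<^sup>2) \<partial>lborel) \<le>
     (\<integral>\<^sup>+\<omega>. ennreal (indicator {0..0+P} \<omega> * ?D \<omega>) * ennreal c1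
    + ennreal (indicator {P..} \<omega> * (8 / \<nu>\<^sup>2 * \<omega> powr e) * ?D \<omega>)
    + ennreal (32 / \<nu>\<^sup>2) * ennreal (indicator {P..} \<omega> * \<omega> powr e)
    + ennreal (2 * (\<bar>\<nu>\<bar>/2) powr e) * ennreal (mm T (\<omega> - \<nu>)) \<partial>lborel)"
    by (rule nn_integral_mono) (rule pw)
  also have "\<dots> = (\<integral>\<^sup>+\<omega>. ennreal (indicator {0..0+P} \<omega> * ?D \<omega>) * ennreal c1 \<partial>lborel)
    + (\<integral>\<^sup>+\<omega>. ennreal (indicator {P..} \<omega> * (8 / \<nu>\<^sup>2 * \<omega> powr e) * ?D \<omega>) \<partial>lborel)
    + (\<integral>\<^sup>+\<omega>. ennreal (32 / \<nu>\<^sup>2) * ennreal (indicator {P..} \<omega> * \<omega> powr e) \<partial>lborel)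
    + (\<integral>\<^sup>+\<omega>. ennreal (2 * (\<bar>\<nu>\<bar>/2) powr e) * ennreal (mm T (\<omega> - \<nu>)) \<partial>lborel)"
    apply (subst nn_integral_add, measurable)
    apply (subst nn_integral_add, measurable)
    apply (subst nn_integral_add, measurable)
    done
  also have "\<dots> \<le> ennreal (real n * P) * ennreal c1
    + ennreal (8 / \<nu>\<^sup>2 * P powr e * Zs H * (real n * P))
    + ennreal (32 / \<nu>\<^sup>2) * ennreal (-(P powr (e+1)) / (e+1))
    + ennreal (2 * (\<bar>\<nu>\<bar>/2) powr e) * ennreal (8 * T)"
  proof (intro add_mono)
    show "(\<integral>\<^sup>+\<omega>. ennreal (indicator {0..0+P} \<omega> * ?D \<omega>) * ennreal c1 \<partial>lborel) \<le> ennreal (real n * P) * ennreal c1"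
      using fejer_nn[OF \<tau>, where c=0 and n=n and \<nu>=\<nu>] by (subst nn_integral_multc) (simp_all add: P_def)
    show "(\<integral>\<^sup>+\<omega>. ennreal (indicator {P..} \<omega> * (8 / \<nu>\<^sup>2 * \<omega> powr e) * ?D \<omega>) \<partial>lborel)
        \<le> ennreal (8 / \<nu>\<^sup>2 * P powr e * Zs H * (real n * P))"
      unfolding P_def e_def by (rule tail_bound[OF H(1) _ \<tau>]) simp
    show "(\<integral>\<^sup>+\<omega>. ennreal (32 / \<nu>\<^sup>2) * ennreal (indicator {P..} \<omega> * \<omega> powr e) \<partial>lborel)
        \<le> ennreal (32 / \<nu>\<^sup>2) * ennreal (-(P powr (e+1)) / (e+1))"
      by (subst nn_integral_cmult) (auto simp: nn_integral_powr_inf[OF e1 P])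
    show "(\<integral>\<^sup>+\<omega>. ennreal (2 * (\<bar>\<nu>\<bar>/2) powr e) * ennreal (mm T (\<omega> - \<nu>)) \<partial>lborel)
        \<le> ennreal (2 * (\<bar>\<nu>\<bar>/2) powr e) * ennreal (8 * T)"
      by (subst nn_integral_cmult) (auto intro!: mult_left_mono nn_integral_mm[OF T])
  qed
  also have "\<dots> = ennreal (real n * P * c1 + 8 / \<nu>\<^sup>2 * P powr e * Zs H * (real n * P)
       + 32 / \<nu>\<^sup>2 * (-(P powr (e+1)) / (e+1)) + 2 * (\<bar>\<nu>\<bar>/2) powr e * (8 * T))"
  proof -
    have n0: "0 \<le> real n * P" using P by simp
    have "P powr (e+1) / (e+1) \<le> 0" using e1 by (intro divide_nonneg_neg) auto
    then have t3: "0 \<le> -(P powr (e+1)) / (e+1)" by simp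
    have b0: "0 \<le> 8 / \<nu>\<^sup>2 * P powr e * Zs H * (real n * P)" using Zs_nonneg[OF H(1)] n0 by simp
    have m1: "ennreal (real n * P) * ennreal c1 = ennreal (real n * P * c1)"
      by (rule ennreal_mult[symmetric, OF n0 c1])
    have m3: "ennreal (32 / \<nu>\<^sup>2) * ennreal (-(P powr (e+1)) / (e+1)) = ennreal (32 / \<nu>\<^sup>2 * (-(P powr (e+1)) / (e+1)))"
      by (rule ennreal_mult[symmetric]) (use t3 in auto)
    have m4: "ennreal (2 * (\<bar>\<nu>\<bar>/2) powr e) * ennreal (8 * T) = ennreal (2 * (\<bar>\<nu>\<bar>/2) powr e * (8 * T))"
      by (rule ennreal_mult[symmetric]) (use T in auto)
    have t3': "0 \<le> 32 / \<nu>\<^sup>2 * (-(P powr (e+1)) / (e+1))" using t3 by (intro mult_nonneg_nonneg) auto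
    show ?thesis unfolding m1 m3 m4
      by (rule ennreal_sum4[OF mult_nonneg_nonneg[OF n0 c1] b0 t3']) (use T in simp)
  qed
  finally show ?thesis unfolding P_def e_def c1_def .
qed



definition KU :: "real \<Rightarrow> real" where
  "KU H = (2*pi) powr (2-2*H) + 4 * (2*pi) powr (-2*H) * Zs H"

definition KD :: "real \<Rightarrow> real" where
  "KD H = 4 * (2*pi) powr (2-2*H) + 8 * (2*pi) powr (-2*H) * Zs H + 16 / H * (2*pi) powr (-2*H) + 16 * 2 powr (1+2*H)"

lemma powr_divide_pos: "(a / b) powr x = a powr x * b powr (-x)" for a b x :: real
proof -
  have "(a/b) powr x = a powr x / b powr x" by (rule powr_divide)
  also have "\<dots> = a powr x * b powr (-x)" by (simp add: powr_minus divide_inverse)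
  finally show ?thesis .
qed

lemma U_simpl:
  assumes H: "0 < H" "H < 1/2" and \<tau>: "0 < \<tau>"
  shows "(2*pi/\<tau>) powr (1-2*H) * \<tau>^4 * (real n * (2*pi/\<tau>))
        + 4 * \<tau>\<^sup>2 * (2*pi/\<tau>) powr (-1-2*H) * Zs H * (real n * (2*pi/\<tau>))
     = KU H * (real n * \<tau>) * \<tau> powr (1+2*H)"
proof -
  define a where "a = 2*pi"
  have a: "0 < a" by (simp add: a_def)
  have p4: "\<tau> powr 4 = \<tau>^4" using \<tau> by (simp add: powr_numeral)
  have p2: "\<tau> powr 2 = \<tau>\<^sup>2" using \<tau> by (simp add: powr_numeral)
  have pm1: "\<tau> powr (-1) = 1/\<tau>" using \<tau> by (simp add: powr_minus_divide)
  have p1: "\<tau> powr 1 = \<tau>" using \<tau> by simp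
  have t1: "\<tau> powr (-(1-2*H)) * \<tau>^4 * (1/\<tau>) = \<tau> * \<tau> powr (1+2*H)"
  proof -
    have "\<tau> powr (-(1-2*H)) * \<tau>^4 * (1/\<tau>) = \<tau> powr (-(1-2*H)) * \<tau> powr 4 * \<tau> powr (-1)"
      by (simp only: p4 pm1)
    also have "\<dots> = \<tau> powr (-(1-2*H) + 4 + -1)" by (simp only: powr_add)
    also have "\<dots> = \<tau> powr (1 + (1+2*H))" by (intro arg_cong[where f="(powr) \<tau>"]) simp
    also have "\<dots> = \<tau> powr 1 * \<tau> powr (1+2*H)" by (simp only: powr_add)
    finally show ?thesis by (simp only: p1)
  qed
  have t2: "\<tau>\<^sup>2 * \<tau> powr (-(-1-2*H)) * (1/\<tau>) = \<tau> * \<tau> powr (1+2*H)"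
  proof -
    have "\<tau>\<^sup>2 * \<tau> powr (-(-1-2*H)) * (1/\<tau>) = \<tau> powr 2 * \<tau> powr (-(-1-2*H)) * \<tau> powr (-1)"
      by (simp only: p2 pm1)
    also have "\<dots> = \<tau> powr (2 + -(-1-2*H) + -1)" by (simp only: powr_add)
    also have "\<dots> = \<tau> powr (1 + (1+2*H))" by (intro arg_cong[where f="(powr) \<tau>"]) simp
    also have "\<dots> = \<tau> powr 1 * \<tau> powr (1+2*H)" by (simp only: powr_add)
    finally show ?thesis by (simp only: p1)
  qed
  have a1: "a powr (1-2*H) * a = a powr (2-2*H)"
  proof -
    have "a powr (2-2*H) = a powr ((1-2*H) + 1)" by (intro arg_cong[where f="(powr) a"]) simp
    also have "\<dots> = a powr (1-2*H) * a powr 1" by (simp only: powr_add)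
    finally show ?thesis using a by simp
  qed
  have a2: "a powr (-1-2*H) * a = a powr (-2*H)"
  proof -
    have "a powr (-2*H) = a powr ((-1-2*H) + 1)" by (intro arg_cong[where f="(powr) a"]) simp
    also have "\<dots> = a powr (-1-2*H) * a powr 1" by (simp only: powr_add)
    finally show ?thesis using a by simp
  qed
  have "(a/\<tau>) powr (1-2*H) * \<tau>^4 * (real n * (a/\<tau>)) = (a powr (1-2*H) * a) * real n * (\<tau> powr (-(1-2*H)) * \<tau>^4 * (1/\<tau>))"
    using a \<tau> by (simp add: powr_divide_pos)
  also have "\<dots> = a powr (2-2*H) * (real n * \<tau>) * \<tau> powr (1+2*H)" unfolding t1 a1 by simp
  finally have e1: "(a/\<tau>) powr (1-2*H) * \<tau>^4 * (real n * (a/\<tau>)) = a powr (2-2*H) * (real n * \<tau>) * \<tau> powr (1+2*H)" .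
  have "4 * \<tau>\<^sup>2 * (a/\<tau>) powr (-1-2*H) * Zs H * (real n * (a/\<tau>)) = 4 * (a powr (-1-2*H) * a) * Zs H * real n * (\<tau>\<^sup>2 * \<tau> powr (-(-1-2*H)) * (1/\<tau>))"
    using a \<tau> by (simp add: powr_divide_pos)
  also have "\<dots> = 4 * a powr (-2*H) * Zs H * (real n * \<tau>) * \<tau> powr (1+2*H)" unfolding t2 a2 by simp
  finally have e2: "4 * \<tau>\<^sup>2 * (a/\<tau>) powr (-1-2*H) * Zs H * (real n * (a/\<tau>)) = 4 * a powr (-2*H) * Zs H * (real n * \<tau>) * \<tau> powr (1+2*H)" .
  show ?thesis using e1 e2 unfolding KU_def a_def[symmetric] by (simp add: algebra_simps)
qed



lemma D_simpl:
  assumes H: "0 < H" "H < 1/2" and \<tau>: "0 < \<tau>" and T: "0 < T" and nT: "real n * \<tau> \<le> T" and tT: "\<tau> \<le> T"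
    and \<nu>: "\<nu> \<noteq> 0"
  shows "real n * (2*pi/\<tau>) * (4 * \<tau>\<^sup>2 / \<nu>\<^sup>2 * (2*pi/\<tau>) powr (1-2*H))
       + 8 / \<nu>\<^sup>2 * (2*pi/\<tau>) powr (-1-2*H) * Zs H * (real n * (2*pi/\<tau>))
       + 32 / \<nu>\<^sup>2 * (-((2*pi/\<tau>) powr (-1-2*H+1)) / (-1-2*H+1))
       + 2 * (\<bar>\<nu>\<bar>/2) powr (-1-2*H) * (8 * T)
     \<le> KD H * T * (\<tau> powr (2*H-1) / \<nu>\<^sup>2 + \<bar>\<nu>\<bar> powr (-1-2*H))"
proof -
  define a where "a = 2*pi"
  have a: "0 < a" by (simp add: a_def)
  define X where "X = \<tau> powr (2*H-1) / \<nu>\<^sup>2"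
  define Y where "Y = \<bar>\<nu>\<bar> powr (-1-2*H)"
  have X0: "0 \<le> X" by (simp add: X_def)
  have Y0: "0 \<le> Y" by (simp add: Y_def)
  have p2: "\<tau> powr 2 = \<tau>\<^sup>2" using \<tau> by (simp add: powr_numeral)
  have pm1: "\<tau> powr (-1) = 1/\<tau>" using \<tau> by (simp add: powr_minus_divide)
  have p1: "\<tau> powr 1 = \<tau>" using \<tau> by simp
  have g1: "\<tau>\<^sup>2 * (1/\<tau>) * \<tau> powr (-(1-2*H)) = \<tau> * \<tau> powr (2*H-1)"
  proof -
    have "\<tau>\<^sup>2 * (1/\<tau>) * \<tau> powr (-(1-2*H)) = \<tau> powr 2 * \<tau> powr (-1) * \<tau> powr (-(1-2*H))"
      by (simp only: p2 pm1)
    also have "\<dots> = \<tau> powr (2 + -1 + -(1-2*H))" by (simp only: powr_add)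
    also have "\<dots> = \<tau> powr (1 + (2*H-1))" by (intro arg_cong[where f="(powr) \<tau>"]) simp
    also have "\<dots> = \<tau> powr 1 * \<tau> powr (2*H-1)" by (simp only: powr_add)
    finally show ?thesis by (simp only: p1)
  qed
  have g2: "\<tau> powr (-(-1-2*H)) * (1/\<tau>) = \<tau> * \<tau> powr (2*H-1)"
  proof -
    have "\<tau> powr (-(-1-2*H)) * (1/\<tau>) = \<tau> powr (-(-1-2*H)) * \<tau> powr (-1)" by (simp only: pm1)
    also have "\<dots> = \<tau> powr (-(-1-2*H) + -1)" by (simp only: powr_add)
    also have "\<dots> = \<tau> powr (1 + (2*H-1))" by (intro arg_cong[where f="(powr) \<tau>"]) simp
    also have "\<dots> = \<tau> powr 1 * \<tau> powr (2*H-1)" by (simp only: powr_add)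
    finally show ?thesis by (simp only: p1)
  qed
  have g3: "\<tau> powr (-(-2*H)) = \<tau> * \<tau> powr (2*H-1)"
  proof -
    have "\<tau> powr (-(-2*H)) = \<tau> powr (1 + (2*H-1))" by (intro arg_cong[where f="(powr) \<tau>"]) simp
    also have "\<dots> = \<tau> powr 1 * \<tau> powr (2*H-1)" by (simp only: powr_add)
    finally show ?thesis by (simp only: p1)
  qed
  have a1: "a * a powr (1-2*H) = a powr (2-2*H)"
  proof -
    have "a powr (2-2*H) = a powr (1 + (1-2*H))" by (intro arg_cong[where f="(powr) a"]) simp
    also have "\<dots> = a powr 1 * a powr (1-2*H)" by (simp only: powr_add)
    finally show ?thesis using a by simp
  qed
  have a2: "a powr (-1-2*H) * a = a powr (-2*H)"
  proof -
    have "a powr (-2*H) = a powr ((-1-2*H) + 1)" by (intro arg_cong[where f="(powr) a"]) simp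
    also have "\<dots> = a powr (-1-2*H) * a powr 1" by (simp only: powr_add)
    finally show ?thesis using a by simp
  qed
  have E1: "real n * (a/\<tau>) * (4 * \<tau>\<^sup>2 / \<nu>\<^sup>2 * (a/\<tau>) powr (1-2*H)) = 4 * a powr (2-2*H) * (real n * \<tau>) * X"
  proof -
    have "real n * (a/\<tau>) * (4 * \<tau>\<^sup>2 / \<nu>\<^sup>2 * (a/\<tau>) powr (1-2*H)) =
        4 * (a * a powr (1-2*H)) * real n * (\<tau>\<^sup>2 * (1/\<tau>) * \<tau> powr (-(1-2*H))) / \<nu>\<^sup>2"
      by (simp add: powr_divide_pos)
    also have "\<dots> = 4 * a powr (2-2*H) * (real n * \<tau>) * X" unfolding g1 a1 X_def by simp
    finally show ?thesis .
  qed
  have E2: "8 / \<nu>\<^sup>2 * (a/\<tau>) powr (-1-2*H) * Zs H * (real n * (a/\<tau>)) = 8 * a powr (-2*H) * Zs H * (real n * \<tau>) * X"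
  proof -
    have "8 / \<nu>\<^sup>2 * (a/\<tau>) powr (-1-2*H) * Zs H * (real n * (a/\<tau>)) =
        8 * (a powr (-1-2*H) * a) * Zs H * real n * (\<tau> powr (-(-1-2*H)) * (1/\<tau>)) / \<nu>\<^sup>2"
      by (simp add: powr_divide_pos mult_ac)
    also have "\<dots> = 8 * a powr (-2*H) * Zs H * (real n * \<tau>) * X" unfolding g2 a2 X_def by simp
    finally show ?thesis .
  qed
  have E3: "32 / \<nu>\<^sup>2 * (-((a/\<tau>) powr (-1-2*H+1)) / (-1-2*H+1)) = 16 / H * a powr (-2*H) * \<tau> * X"
  proof -
    have "-1-2*H+1 = -2*H" by simp
    then have "32 / \<nu>\<^sup>2 * (-((a/\<tau>) powr (-1-2*H+1)) / (-1-2*H+1)) = 16 / H * a powr (-2*H) * \<tau> powr (-(-2*H)) / \<nu>\<^sup>2"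
      using H by (simp add: powr_divide_pos field_simps)
    also have "\<dots> = 16 / H * a powr (-2*H) * \<tau> * X" unfolding g3 X_def by simp
    finally show ?thesis .
  qed
  have E4: "2 * (\<bar>\<nu>\<bar>/2) powr (-1-2*H) * (8 * T) = 16 * 2 powr (1+2*H) * T * Y"
  proof -
    have "(\<bar>\<nu>\<bar>/2) powr (-1-2*H) = \<bar>\<nu>\<bar> powr (-1-2*H) * 2 powr (-(-1-2*H))" by (rule powr_divide_pos)
    moreover have "(2::real) powr (-(-1-2*H)) = 2 powr (1+2*H)" by (intro arg_cong[where f="(powr) 2"]) simp
    ultimately show ?thesis unfolding Y_def by simp
  qed
  define c1 where "c1 = 4 * a powr (2-2*H) + 8 * a powr (-2*H) * Zs H"
  define c2 where "c2 = 16 / H * a powr (-2*H)"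
  define c3 where "c3 = 16 * 2 powr (1+2*H)"
  have c1: "0 \<le> c1" unfolding c1_def using Zs_nonneg[OF H(1)] by simp
  have c2: "0 \<le> c2" unfolding c2_def using H by simp
  have c3: "0 \<le> c3" unfolding c3_def by simp
  have KD: "KD H = c1 + c2 + c3" unfolding KD_def c1_def c2_def c3_def a_def by simp
  have LHS: "4 * a powr (2-2*H) * (real n * \<tau>) * X + 8 * a powr (-2*H) * Zs H * (real n * \<tau>) * X
      + 16 / H * a powr (-2*H) * \<tau> * X + 16 * 2 powr (1+2*H) * T * Y = c1 * (real n * \<tau>) * X + c2 * \<tau> * X + c3 * T * Y"
    unfolding c1_def c2_def c3_def by (simp add: algebra_simps)
  have f1: "c1 * (real n * \<tau>) * X \<le> c1 * T * X" using c1 X0 nT by (intro mult_right_mono mult_left_mono) auto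
  have f2: "c2 * \<tau> * X \<le> c2 * T * X" using c2 X0 tT by (intro mult_right_mono mult_left_mono) auto
  have f3: "0 \<le> c1 * T * Y" "0 \<le> c2 * T * Y" "0 \<le> c3 * T * X" using c1 c2 c3 T X0 Y0 by auto
  have RHS: "KD H * T * (X + Y) = c1 * T * X + c1 * T * Y + c2 * T * X + c2 * T * Y + c3 * T * X + c3 * T * Y"
    unfolding KD by (simp add: algebra_simps)
  show ?thesis
    unfolding a_def[symmetric] E1 E2 E3 E4 LHS X_def[symmetric] Y_def[symmetric] RHS
    using f1 f2 f3 by linarith
qed



definition KK :: "real \<Rightarrow> real" where "KK H = 2 * KU H + 4 * KD H"

lemma KU_nonneg: "0 < H \<Longrightarrow> 0 \<le> KU H"
  unfolding KU_def using Zs_nonneg[of H] by simp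

lemma KD_nonneg: "0 < H \<Longrightarrow> 0 \<le> KD H"
  unfolding KD_def using Zs_nonneg[of H] by simp

lemma ff_measurable[measurable]: "(\<lambda>x. ff \<tau> (f x)) \<in> borel_measurable borel" if [measurable]: "f \<in> borel_measurable borel"
  unfolding ff_def by measurable

lemma GG_measurable[measurable]: "GG n \<tau> \<nu> \<in> borel_measurable borel"
  unfolding GG_def bb_def by measurable

lemma hh_sq_le:
  assumes "0 \<le> \<tau>"
  shows "(cmod (hh n \<tau> \<mu> \<omega>))\<^sup>2 \<le> (cmod (GG n \<tau> \<mu> \<omega>))\<^sup>2 + (cmod (GG n \<tau> (-\<mu>) \<omega>))\<^sup>2"
proof -
  let ?a = "cmod (GG n \<tau> \<mu> \<omega>)" and ?b = "cmod (GG n \<tau> (-\<mu>) \<omega>)"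
  have "cmod (hh n \<tau> \<mu> \<omega>) \<le> (?a + ?b) / 2"
  proof -
    have "cmod (cis (\<mu> * (real n * \<tau>)) * GG n \<tau> \<mu> \<omega> + cis (-\<mu> * (real n * \<tau>)) * GG n \<tau> (-\<mu>) \<omega>) \<le> ?a + ?b"
      using norm_triangle_ineq[of "cis (\<mu> * (real n * \<tau>)) * GG n \<tau> \<mu> \<omega>" "cis (-\<mu> * (real n * \<tau>)) * GG n \<tau> (-\<mu>) \<omega>"]
      by (simp add: norm_mult)
    then show ?thesis unfolding hh_closed[OF assms] by (simp add: norm_divide)
  qed
  then have "(cmod (hh n \<tau> \<mu> \<omega>))\<^sup>2 \<le> ((?a + ?b) / 2)\<^sup>2" by (intro power_mono) auto
  also have "\<dots> \<le> ?a\<^sup>2 + ?b\<^sup>2"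
  proof -
    have "((?a + ?b) / 2)\<^sup>2 = (?a + ?b)\<^sup>2 / 4" by (simp add: power_divide)
    moreover have "(?a + ?b)\<^sup>2 \<le> 2 * ?a\<^sup>2 + 2 * ?b\<^sup>2" by (rule power2_sum_le_2)
    moreover have "0 \<le> ?a\<^sup>2" "0 \<le> ?b\<^sup>2" by auto
    ultimately show ?thesis by linarith
  qed
  finally show ?thesis .
qed

lemma V_two:
  assumes "0 \<le> \<tau>"
  shows "(\<integral>\<^sup>+\<omega>. ennreal (indicator {0<..} \<omega> * \<omega> powr (-1-2*H) * (cmod (hh n \<tau> \<mu> \<omega>))\<^sup>2) \<partial>lborel) \<le>
    (\<integral>\<^sup>+\<omega>. ennreal (indicator {0<..} \<omega> * \<omega> powr (-1-2*H) * (cmod (GG n \<tau> \<mu> \<omega>))\<^sup>2) \<partial>lborel) +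
    (\<integral>\<^sup>+\<omega>. ennreal (indicator {0<..} \<omega> * \<omega> powr (-1-2*H) * (cmod (GG n \<tau> (-\<mu>) \<omega>))\<^sup>2) \<partial>lborel)"
proof -
  have "(\<integral>\<^sup>+\<omega>. ennreal (indicator {0<..} \<omega> * \<omega> powr (-1-2*H) * (cmod (hh n \<tau> \<mu> \<omega>))\<^sup>2) \<partial>lborel) \<le>
    (\<integral>\<^sup>+\<omega>. ennreal (indicator {0<..} \<omega> * \<omega> powr (-1-2*H) * (cmod (GG n \<tau> \<mu> \<omega>))\<^sup>2) +
       ennreal (indicator {0<..} \<omega> * \<omega> powr (-1-2*H) * (cmod (GG n \<tau> (-\<mu>) \<omega>))\<^sup>2) \<partial>lborel)"
  proof (rule nn_integral_mono)
    fix \<omega>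
    have "indicator {0<..} \<omega> * \<omega> powr (-1-2*H) * (cmod (hh n \<tau> \<mu> \<omega>))\<^sup>2 \<le>
        indicator {0<..} \<omega> * \<omega> powr (-1-2*H) * ((cmod (GG n \<tau> \<mu> \<omega>))\<^sup>2 + (cmod (GG n \<tau> (-\<mu>) \<omega>))\<^sup>2)"
      using hh_sq_le[OF assms] by (intro mult_left_mono) auto
    then show "ennreal (indicator {0<..} \<omega> * \<omega> powr (-1-2*H) * (cmod (hh n \<tau> \<mu> \<omega>))\<^sup>2) \<le>
      ennreal (indicator {0<..} \<omega> * \<omega> powr (-1-2*H) * (cmod (GG n \<tau> \<mu> \<omega>))\<^sup>2) +
       ennreal (indicator {0<..} \<omega> * \<omega> powr (-1-2*H) * (cmod (GG n \<tau> (-\<mu>) \<omega>))\<^sup>2)"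
      by (simp add: ennreal_plus[symmetric] ring_distribs ennreal_leI del: ennreal_plus)
  qed
  also have "\<dots> = (\<integral>\<^sup>+\<omega>. ennreal (indicator {0<..} \<omega> * \<omega> powr (-1-2*H) * (cmod (GG n \<tau> \<mu> \<omega>))\<^sup>2) \<partial>lborel) +
    (\<integral>\<^sup>+\<omega>. ennreal (indicator {0<..} \<omega> * \<omega> powr (-1-2*H) * (cmod (GG n \<tau> (-\<mu>) \<omega>))\<^sup>2) \<partial>lborel)"
    by (rule nn_integral_add) measurable
  finally show ?thesis .
qed

lemma V_bound:
  assumes H: "0 < H" "H < 1/2" and \<tau>: "0 < \<tau>" and T: "0 < T" and n: "1 \<le> n" and nT: "real n * \<tau> \<le> T"
    and \<mu>: "0 < \<mu>" and \<gamma>: "0 \<le> \<gamma>" "\<gamma> \<le> 1 + 2*H"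
  shows "(\<integral>\<^sup>+\<omega>. ennreal (indicator {0<..} \<omega> * \<omega> powr (-1-2*H) * (cmod (hh n \<tau> \<mu> \<omega>))\<^sup>2) \<partial>lborel)
    \<le> ennreal (KK H * T * \<tau> powr (1+2*H) * (\<tau> * \<mu>) powr (-\<gamma>))"
proof -
  let ?V = "\<integral>\<^sup>+\<omega>. ennreal (indicator {0<..} \<omega> * \<omega> powr (-1-2*H) * (cmod (hh n \<tau> \<mu> \<omega>))\<^sup>2) \<partial>lborel"
  let ?G = "\<lambda>\<nu>. \<integral>\<^sup>+\<omega>. ennreal (indicator {0<..} \<omega> * \<omega> powr (-1-2*H) * (cmod (GG n \<tau> \<nu> \<omega>))\<^sup>2) \<partial>lborel"
  have "1 * \<tau> \<le> real n * \<tau>" using n \<tau> by (intro mult_right_mono) auto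
  then have tT: "\<tau> \<le> T" using nT by simp
  have V2: "?V \<le> ?G \<mu> + ?G (-\<mu>)" by (rule V_two) (use \<tau> in simp)
  have KU0: "0 \<le> KU H" "0 \<le> KD H" using KU_nonneg KD_nonneg H by auto
  have t0: "0 < \<tau> * \<mu>" using \<tau> \<mu> by simp
  have Ub: "?G \<nu> \<le> ennreal (KU H * T * \<tau> powr (1+2*H))" for \<nu>
  proof -
    have "?G \<nu> \<le> ennreal (KU H * (real n * \<tau>) * \<tau> powr (1+2*H))"
      using uniform_bound[OF H \<tau>, of n \<nu>] unfolding U_simpl[OF H \<tau>] .
    also have "\<dots> \<le> ennreal (KU H * T * \<tau> powr (1+2*H))"
      using KU0 nT by (intro ennreal_leI mult_right_mono mult_left_mono) auto
    finally show ?thesis .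
  qed
  have Db: "?G \<nu> \<le> ennreal (KD H * T * (\<tau> powr (2*H-1) / \<mu>\<^sup>2 + \<mu> powr (-1-2*H)))" if \<nu>: "\<nu> = \<mu> \<or> \<nu> = -\<mu>" for \<nu>
  proof -
    have \<nu>0: "\<nu> \<noteq> 0" using \<nu> \<mu> by auto
    have "\<nu>\<^sup>2 = \<mu>\<^sup>2" "\<bar>\<nu>\<bar> = \<mu>" using \<nu> \<mu> by auto
    then show ?thesis using order_trans[OF decay_bound[OF H \<tau> T nT \<nu>0] ennreal_leI[OF D_simpl[OF H \<tau> T nT tT \<nu>0]]]
      by simp
  qed
  show ?thesis
  proof (cases "\<tau> * \<mu> \<le> 1")
    case True
    have g1: "1 \<le> (\<tau> * \<mu>) powr (-\<gamma>)"
      using powr_mono2'[of "-\<gamma>" "\<tau> * \<mu>" 1] t0 True \<gamma> by simp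
    have "?V \<le> ennreal (KU H * T * \<tau> powr (1+2*H)) + ennreal (KU H * T * \<tau> powr (1+2*H))"
      using V2 Ub[of \<mu>] Ub[of "-\<mu>"] by (meson add_mono order_trans)
    also have "\<dots> = ennreal (2 * KU H * T * \<tau> powr (1+2*H))"
      using KU0 T by (simp add: ennreal_plus[symmetric] del: ennreal_plus)
    also have "\<dots> \<le> ennreal (KK H * T * \<tau> powr (1+2*H) * (\<tau> * \<mu>) powr (-\<gamma>))"
    proof (intro ennreal_leI)
      have "2 * KU H * T * \<tau> powr (1+2*H) \<le> KK H * T * \<tau> powr (1+2*H)"
        using KU0 T unfolding KK_def by (intro mult_right_mono) auto
      also have "\<dots> \<le> KK H * T * \<tau> powr (1+2*H) * (\<tau> * \<mu>) powr (-\<gamma>)"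
      proof -
        have X0: "0 \<le> KK H * T * \<tau> powr (1+2*H)" using KU0 T unfolding KK_def by simp
        show ?thesis using mult_left_mono[OF g1 X0] by simp
      qed
      finally show "2 * KU H * T * \<tau> powr (1+2*H) \<le> KK H * T * \<tau> powr (1+2*H) * (\<tau> * \<mu>) powr (-\<gamma>)" .
    qed
    finally show ?thesis .
  next
    case False
    let ?r = "(\<tau> * \<mu>) powr (-\<gamma>)"
    have r1: "\<tau> powr (2*H-1) / \<mu>\<^sup>2 \<le> \<tau> powr (1+2*H) * ?r"
    proof -
      have "\<tau> powr (2*H-1) / \<mu>\<^sup>2 = \<tau> powr (1+2*H) * (\<tau> * \<mu>) powr (-2)"
      proof -
        have "(\<tau> * \<mu>) powr (-2) = \<tau> powr (-2) * \<mu> powr (-2)" using \<tau> \<mu> by (simp add: powr_mult)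
        moreover have "\<mu> powr (-2) = 1 / \<mu>\<^sup>2" using \<mu> by (simp add: powr_minus_divide powr_numeral)
        moreover have "\<tau> powr (1+2*H) * \<tau> powr (-2) = \<tau> powr (2*H-1)"
        proof -
          have "\<tau> powr (1+2*H) * \<tau> powr (-2) = \<tau> powr ((1+2*H) + -2)" by (simp only: powr_add)
          also have "\<dots> = \<tau> powr (2*H-1)" by (intro arg_cong[where f="(powr) \<tau>"]) simp
          finally show ?thesis .
        qed
        ultimately show ?thesis by (simp add: mult.assoc[symmetric])
      qed
      also have "\<dots> \<le> \<tau> powr (1+2*H) * ?r"
        using False \<gamma> H by (intro mult_left_mono powr_mono) auto
      finally show ?thesis .
    qed
    have r2: "\<mu> powr (-1-2*H) \<le> \<tau> powr (1+2*H) * ?r"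
    proof -
      have "\<mu> powr (-1-2*H) = \<tau> powr (1+2*H) * (\<tau> * \<mu>) powr (-(1+2*H))"
      proof -
        have "(\<tau> * \<mu>) powr (-(1+2*H)) = \<tau> powr (-(1+2*H)) * \<mu> powr (-(1+2*H))" using \<tau> \<mu> by (simp add: powr_mult)
        moreover have "\<tau> powr (1+2*H) * \<tau> powr (-(1+2*H)) = 1"
        proof -
          have "\<tau> powr (1+2*H) * \<tau> powr (-(1+2*H)) = \<tau> powr ((1+2*H) + -(1+2*H))" by (simp only: powr_add)
          then show ?thesis using \<tau> by simp
        qed
        moreover have "\<mu> powr (-(1+2*H)) = \<mu> powr (-1-2*H)" by (intro arg_cong[where f="(powr) \<mu>"]) simp
        ultimately show ?thesis by (metis mult.assoc mult_1)
      qed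
      also have "\<dots> \<le> \<tau> powr (1+2*H) * ?r"
        using False \<gamma> H by (intro mult_left_mono powr_mono) auto
      finally show ?thesis .
    qed
    have "?V \<le> ennreal (KD H * T * (\<tau> powr (2*H-1) / \<mu>\<^sup>2 + \<mu> powr (-1-2*H))) + ennreal (KD H * T * (\<tau> powr (2*H-1) / \<mu>\<^sup>2 + \<mu> powr (-1-2*H)))"
      using V2 Db[of \<mu>] Db[of "-\<mu>"] by (meson add_mono order_trans)
    also have "\<dots> = ennreal (2 * (KD H * T * (\<tau> powr (2*H-1) / \<mu>\<^sup>2 + \<mu> powr (-1-2*H))))"
      using KU0 T by (simp add: ennreal_plus[symmetric] del: ennreal_plus)
    also have "\<dots> \<le> ennreal (KK H * T * \<tau> powr (1+2*H) * (\<tau> * \<mu>) powr (-\<gamma>))"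
    proof (intro ennreal_leI)
      have "2 * (KD H * T * (\<tau> powr (2*H-1) / \<mu>\<^sup>2 + \<mu> powr (-1-2*H))) \<le> 2 * (KD H * T * (2 * (\<tau> powr (1+2*H) * ?r)))"
        using r1 r2 KU0 T by (intro mult_left_mono) auto
      also have "\<dots> = 4 * KD H * T * \<tau> powr (1+2*H) * ?r" by simp
      also have "\<dots> \<le> KK H * T * \<tau> powr (1+2*H) * ?r"
        using KU0 T unfolding KK_def by (intro mult_right_mono) auto
      finally show "2 * (KD H * T * (\<tau> powr (2*H-1) / \<mu>\<^sup>2 + \<mu> powr (-1-2*H))) \<le> KK H * T * \<tau> powr (1+2*H) * ?r" .
    qed
    finally show ?thesis .
  qed
qed



definition hm :: "nat \<Rightarrow> real \<Rightarrow> real \<Rightarrow> nat \<Rightarrow> real \<Rightarrow> complex" where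
  "hm n \<tau> \<mu> m \<omega> = (\<Sum>j<n. \<Sum>p<m. (\<tau> / real m) *\<^sub>R
     (complex_of_real (cos (\<mu> * (real n * \<tau> - (real j * \<tau> + real p * (\<tau> / real m))))) *
      (cis (\<omega> * (real j * \<tau> + real p * (\<tau> / real m))) - cis (\<omega> * (real j * \<tau>)))))"

lemma hm_measurable[measurable]: "hm n \<tau> \<mu> m \<in> borel_measurable borel"
  unfolding hm_def by measurable

lemma hh_measurable[measurable]: "hh n \<tau> \<mu> \<in> borel_measurable borel" if "0 \<le> \<tau>"
proof -
  have "hh n \<tau> \<mu> = (\<lambda>\<omega>. (cis (\<mu> * (real n * \<tau>)) * GG n \<tau> \<mu> \<omega> + cis (-\<mu> * (real n * \<tau>)) * GG n \<tau> (-\<mu>) \<omega>) / 2)"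
    using hh_closed[OF that] by auto
  then show ?thesis by simp
qed

lemma hm_tendsto:
  assumes "0 \<le> \<tau>"
  shows "(\<lambda>m. hm n \<tau> \<mu> m \<omega>) \<longlonglongrightarrow> hh n \<tau> \<mu> \<omega>"
  unfolding hm_def hh_def
proof (rule tendsto_sum)
  fix j assume "j \<in> {..<n}"
  let ?f = "\<lambda>s. complex_of_real (cos (\<mu> * (real n * \<tau> - s))) * (cis (\<omega> * s) - cis (\<omega> * (real j * \<tau>)))"
  have "continuous_on {real j * \<tau>..real j * \<tau> + \<tau>} ?f" by (intro continuous_intros)
  from riemann_sum_tendsto[OF this assms]
  show "(\<lambda>m. \<Sum>p<m. (\<tau> / real m) *\<^sub>R
     (complex_of_real (cos (\<mu> * (real n * \<tau> - (real j * \<tau> + real p * (\<tau> / real m))))) *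
      (cis (\<omega> * (real j * \<tau> + real p * (\<tau> / real m))) - cis (\<omega> * (real j * \<tau>)))))
    \<longlonglongrightarrow> integral {real j * \<tau>..real j * \<tau> + \<tau>} ?f" .
qed

lemma hm_bound:
  assumes \<tau>: "0 \<le> \<tau>" and B: "0 \<le> B"
    and Bb: "\<And>j p. p < m \<Longrightarrow> cmod (cis (\<omega> * (real j * \<tau> + real p * (\<tau> / real m))) - cis (\<omega> * (real j * \<tau>))) \<le> B"
  shows "cmod (hm n \<tau> \<mu> m \<omega>) \<le> real n * \<tau> * B"
proof (cases "m = 0")
  case True then show ?thesis using \<tau> B by (simp add: hm_def)
next
  case False
  have "cmod (hm n \<tau> \<mu> m \<omega>) \<le> (\<Sum>j<n. \<Sum>p<m. (\<tau> / real m) * B)"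
    unfolding hm_def
  proof (intro order_trans[OF norm_sum] sum_mono order_trans[OF norm_sum])
    fix j p assume p: "p \<in> {..<m}"
    have "cmod ((\<tau> / real m) *\<^sub>R
     (complex_of_real (cos (\<mu> * (real n * \<tau> - (real j * \<tau> + real p * (\<tau> / real m))))) *
      (cis (\<omega> * (real j * \<tau> + real p * (\<tau> / real m))) - cis (\<omega> * (real j * \<tau>)))))
      = (\<tau> / real m) * (\<bar>cos (\<mu> * (real n * \<tau> - (real j * \<tau> + real p * (\<tau> / real m))))\<bar> *
         cmod (cis (\<omega> * (real j * \<tau> + real p * (\<tau> / real m))) - cis (\<omega> * (real j * \<tau>))))"
      using \<tau> by (simp add: norm_mult)
    also have "\<dots> \<le> (\<tau> / real m) * (1 * B)"
      using \<tau> Bb[of p j] p B by (intro mult_left_mono mult_mono) auto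
    finally show "cmod ((\<tau> / real m) *\<^sub>R
     (complex_of_real (cos (\<mu> * (real n * \<tau> - (real j * \<tau> + real p * (\<tau> / real m))))) *
      (cis (\<omega> * (real j * \<tau> + real p * (\<tau> / real m))) - cis (\<omega> * (real j * \<tau>)))))
      \<le> \<tau> / real m * B" by simp
  qed
  also have "\<dots> = real n * \<tau> * B" using False by simp
  finally show ?thesis .
qed

lemma hm_bound1: "0 \<le> \<tau> \<Longrightarrow> cmod (hm n \<tau> \<mu> m \<omega>) \<le> real n * \<tau> * (\<bar>\<omega>\<bar> * \<tau>)"
proof (rule hm_bound)
  fix j p assume \<tau>: "0 \<le> \<tau>" and p: "p < m"
  have "cmod (cis (\<omega> * (real j * \<tau> + real p * (\<tau> / real m))) - cis (\<omega> * (real j * \<tau>))) \<le>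
     \<bar>\<omega> * (real j * \<tau> + real p * (\<tau> / real m)) - \<omega> * (real j * \<tau>)\<bar>" by (rule cmod_cis_diff)
  also have "\<dots> = \<bar>\<omega>\<bar> * (real p * (\<tau> / real m))" using \<tau> by (simp add: algebra_simps abs_mult)
  also have "\<dots> \<le> \<bar>\<omega>\<bar> * \<tau>"
  proof -
    have "real p * (\<tau> / real m) \<le> real m * (\<tau> / real m)" using p \<tau> by (intro mult_right_mono) auto
    also have "\<dots> = \<tau>" using p by simp
    finally show ?thesis by (intro mult_left_mono) auto
  qed
  finally show "cmod (cis (\<omega> * (real j * \<tau> + real p * (\<tau> / real m))) - cis (\<omega> * (real j * \<tau>))) \<le> \<bar>\<omega>\<bar> * \<tau>" .
qed auto

lemma hm_bound2: "0 \<le> \<tau> \<Longrightarrow> cmod (hm n \<tau> \<mu> m \<omega>) \<le> real n * \<tau> * 2"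
  by (rule hm_bound) (auto intro: cmod_cis_diff2)

lemma dom_finite:
  assumes H: "0 < H" "H < 1/2"
  shows "(\<integral>\<^sup>+\<omega>. ennreal (indicator {0..1} \<omega> * (c1 * \<omega> powr (1-2*H))) + ennreal (indicator {1..} \<omega> * (c2 * \<omega> powr (-1-2*H))) \<partial>lborel) < \<infinity>"
proof -
  have "(\<integral>\<^sup>+\<omega>. ennreal (indicator {0..1} \<omega> * (c1 * \<omega> powr (1-2*H))) + ennreal (indicator {1..} \<omega> * (c2 * \<omega> powr (-1-2*H))) \<partial>lborel)
    = (\<integral>\<^sup>+\<omega>. ennreal (indicator {0..1} \<omega> * (c1 * \<omega> powr (1-2*H))) \<partial>lborel) + (\<integral>\<^sup>+\<omega>. ennreal (indicator {1..} \<omega> * (c2 * \<omega> powr (-1-2*H))) \<partial>lborel)"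
    by (rule nn_integral_add) auto
  also have "\<dots> \<le> ennreal \<bar>c1\<bar> * (\<integral>\<^sup>+\<omega>. ennreal (indicator {0..1} \<omega> * \<omega> powr (1-2*H)) \<partial>lborel) +
     ennreal \<bar>c2\<bar> * (\<integral>\<^sup>+\<omega>. ennreal (indicator {1..} \<omega> * \<omega> powr (-1-2*H)) \<partial>lborel)"
  proof (intro add_mono)
    show "(\<integral>\<^sup>+\<omega>. ennreal (indicator {0..1} \<omega> * (c1 * \<omega> powr (1-2*H))) \<partial>lborel) \<le>
      ennreal \<bar>c1\<bar> * (\<integral>\<^sup>+\<omega>. ennreal (indicator {0..1} \<omega> * \<omega> powr (1-2*H)) \<partial>lborel)"
      by (subst nn_integral_cmult[symmetric]) (auto intro!: nn_integral_mono ennreal_leI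
          simp: ennreal_mult[symmetric] mult_right_mono indicator_def)
    show "(\<integral>\<^sup>+\<omega>. ennreal (indicator {1..} \<omega> * (c2 * \<omega> powr (-1-2*H))) \<partial>lborel) \<le>
      ennreal \<bar>c2\<bar> * (\<integral>\<^sup>+\<omega>. ennreal (indicator {1..} \<omega> * \<omega> powr (-1-2*H)) \<partial>lborel)"
      by (subst nn_integral_cmult[symmetric]) (auto intro!: nn_integral_mono ennreal_leI
          simp: ennreal_mult[symmetric] mult_right_mono indicator_def)
  qed
  also have "\<dots> < \<infinity>"
    using H by (simp add: nn_integral_powr_0c nn_integral_powr_inf ennreal_mult_less_top)
  finally show ?thesis .
qed

lemma V_lim:
  assumes H: "0 < H" "H < 1/2" and \<tau>: "0 \<le> \<tau>"
  shows "(\<lambda>m. \<integral>\<^sup>+\<omega>. ennreal (indicator {0<..} \<omega> * \<omega> powr (-1-2*H) * (cmod (hm n \<tau> \<mu> m \<omega>))\<^sup>2) \<partial>lborel)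
    \<longlonglongrightarrow> (\<integral>\<^sup>+\<omega>. ennreal (indicator {0<..} \<omega> * \<omega> powr (-1-2*H) * (cmod (hh n \<tau> \<mu> \<omega>))\<^sup>2) \<partial>lborel)"
proof (rule nn_integral_dominated_convergence[where w = "\<lambda>\<omega>. ennreal (indicator {0..1} \<omega> * ((real n * \<tau>)\<^sup>2 * \<tau>\<^sup>2 * \<omega> powr (1-2*H))) + ennreal (indicator {1..} \<omega> * (4 * (real n * \<tau>)\<^sup>2 * \<omega> powr (-1-2*H)))"])
  show "(\<lambda>\<omega>. ennreal (indicator {0<..} \<omega> * \<omega> powr (-1-2*H) * (cmod (hm n \<tau> \<mu> m \<omega>))\<^sup>2)) \<in> borel_measurable lborel" for m
    by measurable
  show "(\<lambda>\<omega>. ennreal (indicator {0<..} \<omega> * \<omega> powr (-1-2*H) * (cmod (hh n \<tau> \<mu> \<omega>))\<^sup>2)) \<in> borel_measurable lborel"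
    using hh_measurable[OF \<tau>] by measurable
  show "(\<lambda>\<omega>. ennreal (indicator {0..1} \<omega> * ((real n * \<tau>)\<^sup>2 * \<tau>\<^sup>2 * \<omega> powr (1-2*H))) + ennreal (indicator {1..} \<omega> * (4 * (real n * \<tau>)\<^sup>2 * \<omega> powr (-1-2*H)))) \<in> borel_measurable lborel"
    by measurable
  show "(\<integral>\<^sup>+\<omega>. ennreal (indicator {0..1} \<omega> * ((real n * \<tau>)\<^sup>2 * \<tau>\<^sup>2 * \<omega> powr (1-2*H))) + ennreal (indicator {1..} \<omega> * (4 * (real n * \<tau>)\<^sup>2 * \<omega> powr (-1-2*H))) \<partial>lborel) < \<infinity>"
    by (rule dom_finite[OF H])
  show "AE \<omega> in lborel. (\<lambda>m. ennreal (indicator {0<..} \<omega> * \<omega> powr (-1-2*H) * (cmod (hm n \<tau> \<mu> m \<omega>))\<^sup>2))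
     \<longlonglongrightarrow> ennreal (indicator {0<..} \<omega> * \<omega> powr (-1-2*H) * (cmod (hh n \<tau> \<mu> \<omega>))\<^sup>2)"
    using hm_tendsto[OF \<tau>] by (intro AE_I2 tendsto_ennrealI tendsto_mult tendsto_const tendsto_power tendsto_norm) auto
  fix m
  show "AE \<omega> in lborel. ennreal (indicator {0<..} \<omega> * \<omega> powr (-1-2*H) * (cmod (hm n \<tau> \<mu> m \<omega>))\<^sup>2) \<le>
     ennreal (indicator {0..1} \<omega> * ((real n * \<tau>)\<^sup>2 * \<tau>\<^sup>2 * \<omega> powr (1-2*H))) + ennreal (indicator {1..} \<omega> * (4 * (real n * \<tau>)\<^sup>2 * \<omega> powr (-1-2*H)))"
  proof (rule AE_I2)
    fix \<omega> :: real
    show "ennreal (indicator {0<..} \<omega> * \<omega> powr (-1-2*H) * (cmod (hm n \<tau> \<mu> m \<omega>))\<^sup>2) \<le>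
     ennreal (indicator {0..1} \<omega> * ((real n * \<tau>)\<^sup>2 * \<tau>\<^sup>2 * \<omega> powr (1-2*H))) + ennreal (indicator {1..} \<omega> * (4 * (real n * \<tau>)\<^sup>2 * \<omega> powr (-1-2*H)))"
    proof (cases "0 < \<omega>")
      case False then show ?thesis by simp
    next
      case w0: True
      show ?thesis
      proof (cases "\<omega> \<le> 1")
        case True
        have "(cmod (hm n \<tau> \<mu> m \<omega>))\<^sup>2 \<le> (real n * \<tau> * (\<bar>\<omega>\<bar> * \<tau>))\<^sup>2"
          using hm_bound1[OF \<tau>] by (intro power_mono) auto
        also have "\<dots> = (real n * \<tau>)\<^sup>2 * \<tau>\<^sup>2 * \<omega>\<^sup>2" using w0 by (simp add: power_mult_distrib)
        finally have hb: "(cmod (hm n \<tau> \<mu> m \<omega>))\<^sup>2 \<le> (real n * \<tau>)\<^sup>2 * \<tau>\<^sup>2 * \<omega>\<^sup>2" .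
        have ww: "\<omega> powr (-1-2*H) * \<omega>\<^sup>2 = \<omega> powr (1-2*H)"
        proof -
          have "\<omega> powr (1-2*H) = \<omega> powr ((-1-2*H) + 2)" by (intro arg_cong[where f="(powr) \<omega>"]) simp
          also have "\<dots> = \<omega> powr (-1-2*H) * \<omega> powr 2" by (rule powr_add)
          also have "\<dots> = \<omega> powr (-1-2*H) * \<omega>\<^sup>2" using w0 by (simp add: powr_numeral)
          finally show ?thesis by simp
        qed
        have "indicator {0<..} \<omega> * \<omega> powr (-1-2*H) * (cmod (hm n \<tau> \<mu> m \<omega>))\<^sup>2 \<le>
            \<omega> powr (-1-2*H) * ((real n * \<tau>)\<^sup>2 * \<tau>\<^sup>2 * \<omega>\<^sup>2)"
          using hb w0 by (simp add: mult_left_mono)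
        also have "\<dots> = indicator {0..1} \<omega> * ((real n * \<tau>)\<^sup>2 * \<tau>\<^sup>2 * \<omega> powr (1-2*H))"
          using True w0 ww by (simp add: mult_ac)
        finally show ?thesis by (intro order_trans[OF _ add_increasing2] ennreal_leI) auto
      next
        case False
        have "(cmod (hm n \<tau> \<mu> m \<omega>))\<^sup>2 \<le> (real n * \<tau> * 2)\<^sup>2"
          using hm_bound2[OF \<tau>] by (intro power_mono) auto
        then have "indicator {0<..} \<omega> * \<omega> powr (-1-2*H) * (cmod (hm n \<tau> \<mu> m \<omega>))\<^sup>2 \<le>
            \<omega> powr (-1-2*H) * (real n * \<tau> * 2)\<^sup>2"
          using w0 by (simp add: mult_left_mono)
        also have "\<dots> = indicator {1..} \<omega> * (4 * (real n * \<tau>)\<^sup>2 * \<omega> powr (-1-2*H))"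
          using False by (simp add: power_mult_distrib mult_ac)
        finally show ?thesis by (intro order_trans[OF _ add_increasing] ennreal_leI) auto
      qed
    qed
  qed
qed



lemma sum_triple:
  fixes F :: "nat \<times> nat \<times> bool \<Rightarrow> 'a::comm_monoid_add"
  shows "(\<Sum>k\<in>{..<n} \<times> {..<m} \<times> UNIV. F k) = (\<Sum>j<n. \<Sum>p<m. F (j, p, True) + F (j, p, False))"
  by (simp add: sum.cartesian_product' UNIV_bool add.commute)

lemma re_term: "Re (r *\<^sub>R (complex_of_real a * (cis x - cis y))) = (r * a) * (cos x - 1) + (- (r * a)) * (cos y - 1)"
  by (simp add: algebra_simps)

lemma im_term: "Im (r *\<^sub>R (complex_of_real a * (cis x - cis y))) = (r * a) * sin x + (- (r * a)) * sin y"
  by (simp add: algebra_simps)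

lemma mode_bound:
  fixes M :: "'w measure" and X :: "real \<Rightarrow> 'w \<Rightarrow> real"
  assumes prob: "prob_space M" and fbm: "is_fbm M H X" and H: "0 < H" "H < 1/2" and \<tau>: "0 < \<tau>"
  shows "(\<lambda>\<omega>. \<Sum>j<n. integral {real j * \<tau> .. real (Suc j) * \<tau>} (\<lambda>s. cos (\<mu> * (real n * \<tau> - s)) * (X s \<omega> - X (real j * \<tau>) \<omega>)))
      \<in> borel_measurable M" (is ?meas)
    and "(\<integral>\<^sup>+\<omega>. ennreal ((\<Sum>j<n. integral {real j * \<tau> .. real (Suc j) * \<tau>} (\<lambda>s. cos (\<mu> * (real n * \<tau> - s)) * (X s \<omega> - X (real j * \<tau>) \<omega>)))\<^sup>2) \<partial>M)
      \<le> ennreal (1 / (2 * Sr H)) * (\<integral>\<^sup>+\<omega>. ennreal (indicator {0<..} \<omega> * \<omega> powr (-1-2*H) * (cmod (hh n \<tau> \<mu> \<omega>))\<^sup>2) \<partial>lborel)"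
    (is ?bnd)
proof -
  have G: "centered_gaussian_process M {0..} X (fbm_cov H)" and
    cont: "\<And>\<omega>. \<omega> \<in> space M \<Longrightarrow> continuous_on {0..} (\<lambda>t. X t \<omega>)"
    using fbm unfolding is_fbm_def by auto
  have Xm: "\<And>t. 0 \<le> t \<Longrightarrow> X t \<in> borel_measurable M"
    using G unfolding centered_gaussian_process_def by auto
  define sp where "sp j p m = real j * \<tau> + real p * (\<tau> / real m)" for j p m :: nat
  have sp0: "0 \<le> sp j p m" for j p m using \<tau> by (simp add: sp_def)
  define Xl where "Xl \<omega> = (\<Sum>j<n. integral {real j * \<tau> .. real (Suc j) * \<tau>} (\<lambda>s. cos (\<mu> * (real n * \<tau> - s)) * (X s \<omega> - X (real j * \<tau>) \<omega>)))" for \<omega>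
  define Xs where "Xs m \<omega> = (\<Sum>j<n. \<Sum>p<m. (\<tau> / real m) *\<^sub>R (cos (\<mu> * (real n * \<tau> - sp j p m)) * (X (sp j p m) \<omega> - X (real j * \<tau>) \<omega>)))" for m \<omega>
  have lim: "(\<lambda>m. Xs m \<omega>) \<longlonglongrightarrow> Xl \<omega>" if \<omega>: "\<omega> \<in> space M" for \<omega>
    unfolding Xs_def Xl_def
  proof (rule tendsto_sum)
    fix j assume "j \<in> {..<n}"
    let ?f = "\<lambda>s. cos (\<mu> * (real n * \<tau> - s)) * (X s \<omega> - X (real j * \<tau>) \<omega>)"
    have "continuous_on {real j * \<tau>..real j * \<tau> + \<tau>} (\<lambda>t. X t \<omega>)"
      by (rule continuous_on_subset[OF cont[OF \<omega>]]) (use \<tau> in auto)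
    then have "continuous_on {real j * \<tau>..real j * \<tau> + \<tau>} ?f" by (intro continuous_intros) auto
    from riemann_sum_tendsto[OF this less_imp_le[OF \<tau>]]
    have "(\<lambda>m. \<Sum>p<m. (\<tau> / real m) *\<^sub>R ?f (real j * \<tau> + real p * (\<tau> / real m))) \<longlonglongrightarrow> integral {real j * \<tau>..real j * \<tau> + \<tau>} ?f" .
    moreover have "real (Suc j) * \<tau> = real j * \<tau> + \<tau>" by (simp add: algebra_simps)
    ultimately show "(\<lambda>m. \<Sum>p<m. (\<tau> / real m) *\<^sub>R (cos (\<mu> * (real n * \<tau> - sp j p m)) * (X (sp j p m) \<omega> - X (real j * \<tau>) \<omega>)))
        \<longlonglongrightarrow> integral {real j * \<tau>..real (Suc j) * \<tau>} ?f"
      by (simp add: sp_def)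
  qed
  have Xsm: "Xs m \<in> borel_measurable M" for m
    unfolding Xs_def
    by (intro borel_measurable_sum borel_measurable_scaleR borel_measurable_times borel_measurable_diff
        borel_measurable_const Xm sp0) (use \<tau> in auto)
  have Xlm: "Xl \<in> borel_measurable M" by (rule borel_measurable_LIMSEQ_real[OF lim Xsm])
  then show ?meas unfolding Xl_def .
  let ?W = "\<lambda>\<omega>. indicator {0<..} \<omega> * \<omega> powr (-1-2*H)"
  have mom: "(\<integral>\<^sup>+\<omega>. ennreal ((Xs m \<omega>)\<^sup>2) \<partial>M) = ennreal (1 / (2 * Sr H)) * (\<integral>\<^sup>+\<omega>. ennreal (?W \<omega> * (cmod (hm n \<tau> \<mu> m \<omega>))\<^sup>2) \<partial>lborel)" for m
  proof -
    define I where "I = {..<n} \<times> {..<m} \<times> (UNIV :: bool set)"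
    define c where "c j p = (\<tau> / real m) * cos (\<mu> * (real n * \<tau> - sp j p m))" for j p
    define tt where "tt k = (case k of (j, p, b) \<Rightarrow> if b then sp j p m else real j * \<tau>)" for k
    define aa where "aa k = (case k of (j, p, b) \<Rightarrow> if b then c j p else - c j p)" for k
    have I: "finite I" by (simp add: I_def)
    have tt0: "\<And>k. k \<in> I \<Longrightarrow> 0 \<le> tt k" using \<tau> sp0 by (auto simp: tt_def split: prod.splits)
    have XsI: "Xs m \<omega> = (\<Sum>k\<in>I. aa k * X (tt k) \<omega>)" for \<omega>
      unfolding I_def sum_triple Xs_def by (intro sum.cong refl) (simp add: aa_def tt_def c_def algebra_simps)
    define Q where "Q = (\<Sum>k\<in>I. \<Sum>l\<in>I. aa k * aa l * fbm_cov H (tt k) (tt l))"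
    have E: "(\<integral>\<^sup>+\<omega>. ennreal ((Xs m \<omega>)\<^sup>2) \<partial>M) = ennreal Q"
      unfolding XsI Q_def by (rule gauss_second_moment[OF prob G H I tt0])
    have hb: "has_bochner_integral lborel
       (\<lambda>\<omega>. ?W \<omega> * ((\<Sum>k\<in>I. aa k * (cos (\<omega> * tt k) - 1))\<^sup>2 + (\<Sum>k\<in>I. aa k * sin (\<omega> * tt k))\<^sup>2)) (2 * Sr H * Q)"
      unfolding Q_def by (rule quad_form[OF H I tt0])
    have eqc: "(\<Sum>k\<in>I. aa k * (cos (\<omega> * tt k) - 1))\<^sup>2 + (\<Sum>k\<in>I. aa k * sin (\<omega> * tt k))\<^sup>2 = (cmod (hm n \<tau> \<mu> m \<omega>))\<^sup>2" for \<omega>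
    proof -
      have re: "Re (hm n \<tau> \<mu> m \<omega>) = (\<Sum>k\<in>I. aa k * (cos (\<omega> * tt k) - 1))"
        unfolding I_def sum_triple hm_def Re_sum Im_sum
        by (intro sum.cong refl) (simp only: re_term aa_def tt_def c_def sp_def prod.case if_True if_False)
      have im: "Im (hm n \<tau> \<mu> m \<omega>) = (\<Sum>k\<in>I. aa k * sin (\<omega> * tt k))"
        unfolding I_def sum_triple hm_def Re_sum Im_sum
        by (intro sum.cong refl) (simp only: im_term aa_def tt_def c_def sp_def prod.case if_True if_False)
      show ?thesis unfolding cmod_power2 re im ..
    qed
    have hb': "has_bochner_integral lborel (\<lambda>\<omega>. ?W \<omega> * (cmod (hm n \<tau> \<mu> m \<omega>))\<^sup>2) (2 * Sr H * Q)"
      using hb unfolding eqc .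
    have "(\<integral>\<^sup>+\<omega>. ennreal (?W \<omega> * (cmod (hm n \<tau> \<mu> m \<omega>))\<^sup>2) \<partial>lborel) = ennreal (integral\<^sup>L lborel (\<lambda>\<omega>. ?W \<omega> * (cmod (hm n \<tau> \<mu> m \<omega>))\<^sup>2))"
      by (rule nn_integral_eq_integral[OF integrable.intros[OF hb']]) auto
    also have "\<dots> = ennreal (2 * Sr H * Q)" using has_bochner_integral_integral_eq[OF hb'] by simp
    finally have V: "(\<integral>\<^sup>+\<omega>. ennreal (?W \<omega> * (cmod (hm n \<tau> \<mu> m \<omega>))\<^sup>2) \<partial>lborel) = ennreal (2 * Sr H * Q)" .
    have S: "0 < Sr H" by (rule Sr_pos[OF H])
    have Q0: "0 \<le> Q" unfolding Q_def by (rule quad_nonneg[OF H I tt0])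
    show ?thesis unfolding E V using S Q0 by (simp add: ennreal_mult[symmetric])
  qed
  define V where "V = (\<integral>\<^sup>+\<omega>. ennreal (?W \<omega> * (cmod (hh n \<tau> \<mu> \<omega>))\<^sup>2) \<partial>lborel)"
  have Vlim: "(\<lambda>m. ennreal (1 / (2 * Sr H)) * (\<integral>\<^sup>+\<omega>. ennreal (?W \<omega> * (cmod (hm n \<tau> \<mu> m \<omega>))\<^sup>2) \<partial>lborel))
      \<longlonglongrightarrow> ennreal (1 / (2 * Sr H)) * V"
    unfolding V_def by (rule ennreal_tendsto_cmult) (use V_lim[OF H less_imp_le[OF \<tau>]] in auto)
  have "(\<integral>\<^sup>+\<omega>. ennreal ((Xl \<omega>)\<^sup>2) \<partial>M) = (\<integral>\<^sup>+\<omega>. liminf (\<lambda>m. ennreal ((Xs m \<omega>)\<^sup>2)) \<partial>M)"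
  proof (rule nn_integral_cong)
    fix \<omega> assume \<omega>: "\<omega> \<in> space M"
    have t: "(\<lambda>m. ennreal ((Xs m \<omega>)\<^sup>2)) \<longlonglongrightarrow> ennreal ((Xl \<omega>)\<^sup>2)"
      using lim[OF \<omega>] by (intro tendsto_ennrealI tendsto_power)
    have "liminf (\<lambda>m. ennreal ((Xs m \<omega>)\<^sup>2)) = ennreal ((Xl \<omega>)\<^sup>2)"
      by (rule lim_imp_Liminf[OF _ t]) simp
    then show "ennreal ((Xl \<omega>)\<^sup>2) = liminf (\<lambda>m. ennreal ((Xs m \<omega>)\<^sup>2))" by simp
  qed
  also have "\<dots> \<le> liminf (\<lambda>m. \<integral>\<^sup>+\<omega>. ennreal ((Xs m \<omega>)\<^sup>2) \<partial>M)"
    by (rule nn_integral_liminf) (use Xsm in measurable)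
  also have "\<dots> = ennreal (1 / (2 * Sr H)) * V"
    unfolding mom by (rule lim_imp_Liminf[OF _ Vlim]) simp
  finally show ?bnd unfolding Xl_def V_def .
qed



lemma mode_final:
  fixes M :: "'w measure" and X :: "real \<Rightarrow> 'w \<Rightarrow> real"
  assumes prob: "prob_space M" and fbm: "is_fbm M H X" and H: "0 < H" "H < 1/2" and \<tau>: "0 < \<tau>"
    and T: "0 < T" and n: "1 \<le> n" and nT: "real n * \<tau> \<le> T" and \<mu>: "0 < \<mu>" and \<gamma>: "0 \<le> \<gamma>" "\<gamma> \<le> 1 + 2*H"
  shows "(\<integral>\<^sup>+\<omega>. ennreal ((\<Sum>j<n. integral {real j * \<tau> .. real (Suc j) * \<tau>} (\<lambda>s. cos (\<mu> * (real n * \<tau> - s)) * (X s \<omega> - X (real j * \<tau>) \<omega>)))\<^sup>2) \<partial>M)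
      \<le> ennreal (1 / (2 * Sr H) * (KK H * T * \<tau> powr (1+2*H) * (\<tau> * \<mu>) powr (-\<gamma>)))"
proof -
  have S: "0 < Sr H" by (rule Sr_pos[OF H])
  note mode_bound(2)[OF prob fbm H \<tau>, where n=n and \<mu>=\<mu>]
  also have "ennreal (1 / (2 * Sr H)) * (\<integral>\<^sup>+\<omega>. ennreal (indicator {0<..} \<omega> * \<omega> powr (-1-2*H) * (cmod (hh n \<tau> \<mu> \<omega>))\<^sup>2) \<partial>lborel)
     \<le> ennreal (1 / (2 * Sr H)) * ennreal (KK H * T * \<tau> powr (1+2*H) * (\<tau> * \<mu>) powr (-\<gamma>))"
    by (intro mult_left_mono V_bound[OF H \<tau> T n nT \<mu> \<gamma>]) auto
  also have "\<dots> = ennreal (1 / (2 * Sr H) * (KK H * T * \<tau> powr (1+2*H) * (\<tau> * \<mu>) powr (-\<gamma>)))"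
  proof -
    have KK0: "0 \<le> KK H" unfolding KK_def using KU_nonneg KD_nonneg H by simp
    show ?thesis by (rule ennreal_mult[symmetric]) (use S KK0 T \<tau> in auto)
  qed
  finally show ?thesis .
qed

theorem proposition2:
  fixes M :: "'w measure"
    and \<xi> :: "nat \<Rightarrow> real \<Rightarrow> 'w \<Rightarrow> real"
    and lam q :: "nat \<Rightarrow> real"
    and \<alpha> H T \<rho> :: real
  assumes prob: "prob_space M"
    and fbm: "\<And>i. is_fbm M H (\<xi> i)"
    and indep: "prob_space.indep_vars M (\<lambda>_. Pi\<^sub>M UNIV (\<lambda>_. borel)) (\<lambda>i \<omega> t. \<xi> i t \<omega>) UNIV"
    and eig_pos: "0 < lam 0" and eig_mono: "mono lam" and eig_lim: "filterlim lam at_top sequentially"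
    and q_nonneg: "\<And>i. 0 \<le> q i"
    and alpha: "0 < \<alpha>" "\<alpha> < 1"
    and hurst: "0 < H" "H < 1/2"
    and T: "0 < T"
    and rho: "- \<alpha>/4 - H*\<alpha>/2 < \<rho>" "\<rho> < (\<alpha>+1)/4 - H*\<alpha>/2"
    and trace: "summable (\<lambda>i. lam i powr (2*\<rho>) * q i)"
    and kappa: "0 < \<alpha>/2 + H*\<alpha> + 2*\<rho>"
  shows "\<exists>C. \<forall>N::nat. \<forall>n::nat. 0 < N \<longrightarrow> 1 \<le> n \<longrightarrow> n \<le> N \<longrightarrow>
    (let \<tau> = T / real N; \<kappa> = \<alpha>/2 + H*\<alpha> + 2*\<rho> in
      (\<integral>\<^sup>+ \<omega>. (\<Sum>i. ennreal (q i *
          (\<Sum>j<n. integral {real j * \<tau> .. real (Suc j) * \<tau>}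
             (\<lambda>s. cos (lam i powr (\<alpha>/2) * (real n * \<tau> - s)) * (\<xi> i s \<omega> - \<xi> i (real j * \<tau>) \<omega>)))\<^sup>2)) \<partial>M)
      \<le> ennreal (if \<kappa> \<le> \<alpha>/2 + H*\<alpha> then C * \<tau> powr (2*\<kappa>/\<alpha>) else C * \<tau> powr (2*H+1)))"
proof -
  define \<kappa> where "\<kappa> = \<alpha>/2 + H*\<alpha> + 2*\<rho>"
  define \<gamma> where "\<gamma> = (if \<rho> \<le> 0 then -4*\<rho>/\<alpha> else 0)"
  define L where "L = (if \<rho> \<le> 0 then 1 else lam 0 powr (-2*\<rho>))"
  define S where "S = (\<Sum>i. lam i powr (2*\<rho>) * q i)"
  define A where "A = 1 / (2 * Sr H) * KK H * T * L"
  define C where "C = A * S"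
  have lam_pos: "\<And>i. 0 < lam i" using eig_pos eig_mono by (metis less_le_trans mono_def zero_le)
  have lam_ge: "\<And>i. lam 0 \<le> lam i" using eig_mono by (simp add: mono_def)
  have \<gamma>: "0 \<le> \<gamma>" "\<gamma> \<le> 1 + 2*H"
  proof -
    show "0 \<le> \<gamma>" using alpha by (auto simp: \<gamma>_def divide_le_0_iff)
    have "-4*\<rho>/\<alpha> \<le> 1 + 2*H"
    proof -
      have h: "-4*\<rho> \<le> (1 + 2*H) * \<alpha>" using rho(1) alpha by (simp add: field_simps)
      show ?thesis by (simp only: pos_divide_le_eq[OF alpha(1)]) (rule h)
    qed
    then show "\<gamma> \<le> 1 + 2*H" using hurst by (auto simp: \<gamma>_def)
  qed
  have S0: "0 \<le> S" unfolding S_def using trace q_nonneg by (intro suminf_nonneg) auto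
  have KK0: "0 \<le> KK H" unfolding KK_def using KU_nonneg KD_nonneg hurst by simp
  have L0: "0 \<le> L" by (simp add: L_def)
  have A0: "0 \<le> A" unfolding A_def using Sr_pos[OF hurst] KK0 T L0 by simp
  show ?thesis
  proof (intro exI[of _ C] allI impI)
    fix N n :: nat assume N: "0 < N" and n: "1 \<le> n" and nN: "n \<le> N"
    define \<tau> where "\<tau> = T / real N"
    have \<tau>: "0 < \<tau>" using T N by (simp add: \<tau>_def)
    have nT: "real n * \<tau> \<le> T" using nN N T by (simp add: \<tau>_def field_simps)
    define e where "e = (if \<kappa> \<le> \<alpha>/2 + H*\<alpha> then 2*\<kappa>/\<alpha> else 2*H+1)"
    let ?X = "\<lambda>i \<omega>. (\<Sum>j<n. integral {real j * \<tau> .. real (Suc j) * \<tau>}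
             (\<lambda>s. cos (lam i powr (\<alpha>/2) * (real n * \<tau> - s)) * (\<xi> i s \<omega> - \<xi> i (real j * \<tau>) \<omega>)))"
    have per: "(\<integral>\<^sup>+\<omega>. ennreal ((?X i \<omega>)\<^sup>2) \<partial>M) \<le> ennreal (A * \<tau> powr e * lam i powr (2*\<rho>))" for i
    proof -
      have \<mu>: "0 < lam i powr (\<alpha>/2)" using lam_pos[of i] by simp
      note mf = mode_final[OF prob fbm hurst \<tau> T n nT \<mu> \<gamma>]
      have key: "1 / (2 * Sr H) * (KK H * T * \<tau> powr (1+2*H) * (\<tau> * lam i powr (\<alpha>/2)) powr (-\<gamma>))
          \<le> A * \<tau> powr e * lam i powr (2*\<rho>)"
      proof (cases "\<rho> \<le> 0")
        case True
        have ke: "\<kappa> \<le> \<alpha>/2 + H*\<alpha>" using True by (simp add: \<kappa>_def)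
        have "\<tau> powr (1+2*H) * (\<tau> * lam i powr (\<alpha>/2)) powr (-\<gamma>) = \<tau> powr e * lam i powr (2*\<rho>)"
        proof -
          have "(\<tau> * lam i powr (\<alpha>/2)) powr (-\<gamma>) = \<tau> powr (-\<gamma>) * (lam i powr (\<alpha>/2)) powr (-\<gamma>)"
            using \<tau> \<mu> by (simp add: powr_mult)
          moreover have "(lam i powr (\<alpha>/2)) powr (-\<gamma>) = lam i powr (2*\<rho>)"
          proof -
            have "(lam i powr (\<alpha>/2)) powr (-\<gamma>) = lam i powr (\<alpha>/2 * (-\<gamma>))" by (rule powr_powr)
            moreover have "\<alpha>/2 * (-\<gamma>) = 2*\<rho>" using True alpha by (simp add: \<gamma>_def field_simps)
            ultimately show ?thesis by simp
          qed
          moreover have "\<tau> powr (1+2*H) * \<tau> powr (-\<gamma>) = \<tau> powr e"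
          proof -
            have "\<tau> powr (1+2*H) * \<tau> powr (-\<gamma>) = \<tau> powr ((1+2*H) + -\<gamma>)" by (simp only: powr_add)
            moreover have "(1+2*H) + -\<gamma> = e" using True ke alpha
              by (simp add: \<gamma>_def e_def \<kappa>_def field_simps)
            ultimately show ?thesis by simp
          qed
          ultimately show ?thesis by (simp add: mult_ac)
        qed
        then show ?thesis unfolding A_def L_def using True by (simp add: mult_ac)
      next
        case False
        have ke: "\<not> \<kappa> \<le> \<alpha>/2 + H*\<alpha>" using False by (simp add: \<kappa>_def)
        have g0: "\<gamma> = 0" using False by (simp add: \<gamma>_def)
        have eq: "e = 1 + 2*H" using ke by (simp add: e_def)
        have l1: "1 \<le> lam 0 powr (-2*\<rho>) * lam i powr (2*\<rho>)"
        proof -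
          have "lam 0 powr (2*\<rho>) \<le> lam i powr (2*\<rho>)"
            using lam_ge[of i] eig_pos False by (intro powr_mono2) auto
          moreover have "lam 0 powr (-2*\<rho>) * lam 0 powr (2*\<rho>) = 1"
          proof -
            have "lam 0 powr (-2*\<rho>) * lam 0 powr (2*\<rho>) = lam 0 powr (-2*\<rho> + 2*\<rho>)" by (simp only: powr_add)
            then show ?thesis using eig_pos by simp
          qed
          moreover have "0 \<le> lam 0 powr (-2*\<rho>)" by simp
          ultimately show ?thesis by (metis mult_left_mono)
        qed
        have B0: "0 \<le> 1 / (2 * Sr H) * KK H * T * \<tau> powr (1+2*H)" using Sr_pos[OF hurst] KK0 T by simp
        have "1 / (2 * Sr H) * (KK H * T * \<tau> powr (1+2*H) * (\<tau> * lam i powr (\<alpha>/2)) powr (-\<gamma>))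
           = (1 / (2 * Sr H) * KK H * T * \<tau> powr (1+2*H)) * 1" using g0 \<tau> lam_pos[of i] by simp
        also have "\<dots> \<le> (1 / (2 * Sr H) * KK H * T * \<tau> powr (1+2*H)) * (lam 0 powr (-2*\<rho>) * lam i powr (2*\<rho>))"
          by (rule mult_left_mono[OF l1 B0])
        also have "\<dots> = A * \<tau> powr e * lam i powr (2*\<rho>)"
          unfolding A_def L_def eq using False by (simp add: mult_ac)
        finally show ?thesis .
      qed
      show ?thesis using order_trans[OF mf ennreal_leI[OF key]] .
    qed
    define Xf where "Xf = ?X"
    have Xfm[measurable]: "Xf i \<in> borel_measurable M" for i
      unfolding Xf_def using mode_bound(1)[OF prob fbm hurst \<tau>, where n=n and \<mu>="lam i powr (\<alpha>/2)"] .
    have meas: "(\<lambda>\<omega>. ennreal (q i * (Xf i \<omega>)\<^sup>2)) \<in> borel_measurable M" for i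
      by measurable
    have "(\<integral>\<^sup>+\<omega>. (\<Sum>i. ennreal (q i * (Xf i \<omega>)\<^sup>2)) \<partial>M) = (\<Sum>i. \<integral>\<^sup>+\<omega>. ennreal (q i * (Xf i \<omega>)\<^sup>2) \<partial>M)"
      by (rule nn_integral_suminf[OF meas])
    also have "\<dots> = (\<Sum>i. ennreal (q i) * \<integral>\<^sup>+\<omega>. ennreal ((Xf i \<omega>)\<^sup>2) \<partial>M)"
    proof (intro suminf_cong)
      fix i
      have "(\<integral>\<^sup>+\<omega>. ennreal (q i * (Xf i \<omega>)\<^sup>2) \<partial>M) = (\<integral>\<^sup>+\<omega>. ennreal (q i) * ennreal ((Xf i \<omega>)\<^sup>2) \<partial>M)"
        using q_nonneg[of i] by (intro nn_integral_cong) (simp add: ennreal_mult)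
      also have "\<dots> = ennreal (q i) * \<integral>\<^sup>+\<omega>. ennreal ((Xf i \<omega>)\<^sup>2) \<partial>M"
        by (intro nn_integral_cmult) measurable
      finally show "(\<integral>\<^sup>+\<omega>. ennreal (q i * (Xf i \<omega>)\<^sup>2) \<partial>M) = ennreal (q i) * \<integral>\<^sup>+\<omega>. ennreal ((Xf i \<omega>)\<^sup>2) \<partial>M" .
    qed
    also have "\<dots> \<le> (\<Sum>i. ennreal (A * \<tau> powr e * (lam i powr (2*\<rho>) * q i)))"
    proof (intro suminf_le)
      fix i
      have "ennreal (q i) * \<integral>\<^sup>+\<omega>. ennreal ((Xf i \<omega>)\<^sup>2) \<partial>M \<le> ennreal (q i) * ennreal (A * \<tau> powr e * lam i powr (2*\<rho>))"
        by (intro mult_left_mono) (use per[of i] in \<open>auto simp: Xf_def\<close>)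
      also have "\<dots> = ennreal (A * \<tau> powr e * (lam i powr (2*\<rho>) * q i))"
        using q_nonneg[of i] A0 by (simp add: ennreal_mult[symmetric] mult_ac)
      finally show "ennreal (q i) * \<integral>\<^sup>+\<omega>. ennreal ((Xf i \<omega>)\<^sup>2) \<partial>M \<le> ennreal (A * \<tau> powr e * (lam i powr (2*\<rho>) * q i))" .
    qed auto
    also have "\<dots> = ennreal (\<Sum>i. A * \<tau> powr e * (lam i powr (2*\<rho>) * q i))"
      using A0 q_nonneg by (intro suminf_ennreal2 summable_mult trace) auto
    also have "\<dots> = ennreal (C * \<tau> powr e)"
    proof -
      have "(\<Sum>i. A * \<tau> powr e * (lam i powr (2*\<rho>) * q i)) = A * \<tau> powr e * S"
        unfolding S_def by (rule suminf_mult[OF trace])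
      then show ?thesis by (simp add: C_def mult_ac)
    qed
    finally have fin: "(\<integral>\<^sup>+\<omega>. (\<Sum>i. ennreal (q i * (Xf i \<omega>)\<^sup>2)) \<partial>M) \<le> ennreal (C * \<tau> powr e)" .
    show "let \<tau> = T / real N; \<kappa> = \<alpha>/2 + H*\<alpha> + 2*\<rho> in
      (\<integral>\<^sup>+ \<omega>. (\<Sum>i. ennreal (q i *
          (\<Sum>j<n. integral {real j * \<tau> .. real (Suc j) * \<tau>}
             (\<lambda>s. cos (lam i powr (\<alpha>/2) * (real n * \<tau> - s)) * (\<xi> i s \<omega> - \<xi> i (real j * \<tau>) \<omega>)))\<^sup>2)) \<partial>M)
      \<le> ennreal (if \<kappa> \<le> \<alpha>/2 + H*\<alpha> then C * \<tau> powr (2*\<kappa>/\<alpha>) else C * \<tau> powr (2*H+1))"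
      unfolding Let_def \<tau>_def[symmetric] \<kappa>_def[symmetric]
      using fin unfolding Xf_def by (simp add: e_def split: if_splits)
  qed
qed


end
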